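(* Let $Z$ be a non-degenerate max-stable random variable (i.e. $Z$ arises as a non-degenerate limit in distribution of $a_n\max\{X_1,\dots,X_n\}-b_n$ for some i.i.d. sequence $X_1,X_2,\dots$ and constants $a_n>0$, $b_n\in\mathbb{R}$). Then $Z\in\mathcal{D}^-$ if and only if $Z$ is, up to a transformation $z\mapsto az+b$ with $a>0$, $b\in\mathbb{R}$, a Fréchet distribution with distribution function $F(x)=e^{-x^{-\alpha}}$, $x>0$, with parameter $0<\alpha\le1$.
   Context: For real random variables, $X \le_{st} Y$ means $P(X\le t)\ge P(Y\le t)$ for all $t\in\mathbb{R}$. A real random variable $X$ (equivalently its distribution function $F_X$) belongs to $\mathcal{D}^-$ if for every $n\in\mathbb{N}$, all $\theta_1,\dots,\theta_n\ge 0$ with $\sum_{i=1}^n\theta_i=1$, and i.i.d. random variables $X_1,\dots,X_n$ with distribution $F_X$, we have $X_1\le_{st}\sum_{i=1}^n\theta_iX_i$. *)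

theory Defs
  imports "HOL-Probability.Probability"
begin

definition stoch_le :: "real measure \<Rightarrow> real measure \<Rightarrow> bool" where
  "stoch_le X Y \<longleftrightarrow> (\<forall>t. cdf X t \<ge> cdf Y t)"

text \<open>The class D^-: for i.i.d. X_1,...,X_n with distribution M (modelled canonically
  by the product measure), X_1 \<le>st sum theta_i X_i.  Indices are 0..n-1.\<close>
definition D_minus :: "real measure \<Rightarrow> bool" where
  "D_minus M \<longleftrightarrow>
     (\<forall>(n::nat) (\<theta>::nat \<Rightarrow> real).
        (\<forall>i<n. \<theta> i \<ge> 0) \<and> (\<Sum>i<n. \<theta> i) = 1 \<longrightarrow>
        stoch_le M (distr (PiM {..<n} (\<lambda>_. M)) borel (\<lambda>x. \<Sum>i<n. \<theta> i * x i)))"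

definition nondegenerate :: "real measure \<Rightarrow> bool" where
  "nondegenerate Z \<longleftrightarrow> (\<forall>c. measure Z {c} < 1)"

text \<open>Max-stable: non-degenerate weak limit of a_n max(X_1..X_n) - b_n for i.i.d. X_i
  with distribution N; the sequence index n corresponds to n+1 variables.\<close>
definition max_stable :: "real measure \<Rightarrow> bool" where
  "max_stable Z \<longleftrightarrow> real_distribution Z \<and> nondegenerate Z \<and>
     (\<exists>N (a::nat \<Rightarrow> real) (b::nat \<Rightarrow> real). real_distribution N \<and> (\<forall>n. a n > 0) \<and>
        weak_conv_m
          (\<lambda>n. distr (PiM {..<Suc n} (\<lambda>_. N)) borel
                 (\<lambda>x. a n * Max (x ` {..<Suc n}) - b n)) Z)"

definition frechet_cdf :: "real \<Rightarrow> real \<Rightarrow> real" where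
  "frechet_cdf \<alpha> x = (if x > 0 then exp (- (x powr (- \<alpha>))) else 0)"

end

theory Submission
  imports Defs
begin


lemma prod_meas:
  assumes "prob_space M" "finite I" "\<And>i. i \<in> I \<Longrightarrow> A i \<in> sets M"
  shows "measure (PiM I (\<lambda>_. M)) {x \<in> space (PiM I (\<lambda>_. M)). \<forall>i\<in>I. x i \<in> A i} = (\<Prod>i\<in>I. measure M (A i))"
proof -
  interpret product_prob_space "\<lambda>_. M" I
    using assms(1) by (simp add: product_prob_space_def product_sigma_finite_def prob_space_imp_sigma_finite product_prob_space_axioms_def)
  have "{x \<in> space (PiM I (\<lambda>_. M)). \<forall>i\<in>I. x i \<in> A i} = prod_emb I (\<lambda>_. M) I (Pi\<^sub>E I A)"
    using assms unfolding prod_emb_def by (auto simp: space_PiM Pi_iff PiE_def extensional_def)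
  then show ?thesis using measure_PiM_emb[of I A] assms by simp
qed

lemma cdf_max:
  assumes "real_distribution N" "a > 0"
  shows "cdf (distr (PiM {..<Suc n} (\<lambda>_. N)) borel (\<lambda>x. a * Max (x ` {..<Suc n}) - b)) y
        = cdf N ((y + b) / a) ^ Suc n"
proof -
  interpret N: real_distribution N by fact
  let ?P = "PiM {..<Suc n} (\<lambda>_. N)"
  have meas: "(\<lambda>x. a * Max (x ` {..<Suc n}) - b) \<in> borel_measurable ?P"
    by measurable
  have "cdf (distr ?P borel (\<lambda>x. a * Max (x ` {..<Suc n}) - b)) y
     = measure ?P ((\<lambda>x. a * Max (x ` {..<Suc n}) - b) -` {..y} \<inter> space ?P)"
    unfolding cdf_def using meas by (simp add: measure_distr)
  also have "(\<lambda>x. a * Max (x ` {..<Suc n}) - b) -` {..y} \<inter> space ?P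
     = {x \<in> space ?P. \<forall>i\<in>{..<Suc n}. x i \<in> {..(y+b)/a}}"
  proof -
    have "\<And>x. (a * Max (x ` {..<Suc n}) - b \<le> y) = (Max (x ` {..<Suc n}) \<le> (y+b)/a)"
      using assms(2) by (simp add: field_simps)
    moreover have "\<And>x. (Max (x ` {..<Suc n}) \<le> (y+b)/a) = (\<forall>i\<in>{..<Suc n}. x i \<le> (y+b)/a)"
      by (subst Max_le_iff) auto
    ultimately show ?thesis by auto
  qed
  also have "measure ?P \<dots> = (\<Prod>i\<in>{..<Suc n}. measure N {..(y+b)/a})"
    by (rule prod_meas) (auto simp: N.prob_space_axioms)
  finally show ?thesis by (simp add: cdf_def)
qed


definition dfun :: "(real \<Rightarrow> real) \<Rightarrow> bool" where
  "dfun U \<longleftrightarrow> mono U \<and> (\<forall>y. continuous (at_right y) U) \<and> (U \<longlongrightarrow> 0) at_bot \<and>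
     (U \<longlongrightarrow> 1) at_top \<and> (\<exists>y. 0 < U y \<and> U y < 1)"

lemma good_pt:
  fixes a b :: real
  assumes "countable S" "a < b"
  shows "\<exists>x. a < x \<and> x < b \<and> x \<notin> S"
proof (rule ccontr)
  assume "\<not> ?thesis"
  then have "{a<..<b} \<subseteq> S" by auto
  then have "countable {a<..<b}" using assms(1) countable_subset by blast
  with assms(2) show False using uncountable_open_interval by blast
qed

lemma good_cont:
  fixes U :: "real \<Rightarrow> real"
  assumes "mono U" "a < b"
  shows "\<exists>x. a < x \<and> x < b \<and> isCont U x"
  using good_pt[OF mono_ctble_discont[OF assms(1)] assms(2)] by auto

lemma good_V:
  assumes "dfun V"
  shows "\<exists>y1 y2. y1 < y2 \<and> isCont V y1 \<and> isCont V y2 \<and> 0 < V y1 \<and> V y1 < 1 \<and> 0 < V y2 \<and> V y2 < 1"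
proof -
  have mono: "mono V" and rc: "\<And>y. continuous (at_right y) V" using assms by (auto simp: dfun_def)
  obtain y0 where y0: "0 < V y0" "V y0 < 1" using assms by (auto simp: dfun_def)
  obtain d where d: "d > 0" "V (y0 + d) - V y0 < 1 - V y0"
  proof -
    have "\<forall>\<epsilon>>0. \<exists>\<delta>>0. V (y0 + \<delta>) - V y0 < \<epsilon>"
      using rc[of y0] continuous_at_right_real_increasing[of V y0] mono by (auto simp: mono_def)
    then obtain \<delta> where "\<delta> > 0" "V (y0 + \<delta>) - V y0 < 1 - V y0" using y0 by (meson diff_gt_0_iff_gt)
    then show ?thesis using that by auto
  qed
  obtain y1 where y1: "y0 < y1" "y1 < y0 + d" "isCont V y1" using good_cont[OF mono, of y0 "y0+d"] d by auto
  obtain y2 where y2: "y1 < y2" "y2 < y0 + d" "isCont V y2" using good_cont[OF mono, of y1 "y0+d"] y1 by auto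
  have "V y0 \<le> V y1" "V y1 \<le> V y2" "V y2 \<le> V (y0 + d)"
    using y1 y2 mono by (auto simp: mono_def)
  then show ?thesis using y1 y2 y0 d by (intro exI[of _ y1] exI[of _ y2]) auto
qed

lemma bound_up:
  fixes P :: "nat \<Rightarrow> real \<Rightarrow> real"
  assumes monoP: "\<And>n. mono (P n)" and mono: "mono U" and top: "(U \<longlongrightarrow> 1) at_top"
    and HU: "\<And>u. isCont U u \<Longrightarrow> (\<lambda>n. P n (\<alpha> n * u + \<beta> n)) \<longlonglongrightarrow> U u"
    and HV: "(\<lambda>n. P n (\<gamma> n * y + \<delta> n)) \<longlonglongrightarrow> v" and v: "v < 1"
  shows "\<exists>M. eventually (\<lambda>n. \<gamma> n * y + \<delta> n \<le> \<alpha> n * M + \<beta> n) sequentially"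
proof -
  have "eventually (\<lambda>u. U u > (v + 1)/2) at_top"
    using top v by (intro order_tendstoD) auto
  then obtain M0 where M0: "\<And>u. u \<ge> M0 \<Longrightarrow> U u > (v+1)/2" by (auto simp: eventually_at_top_linorder)
  obtain M where M: "M0 < M" "isCont U M" using good_cont[OF mono, of M0 "M0+1"] by auto
  have UM: "U M > (v+1)/2" using M M0 by auto
  have e1: "eventually (\<lambda>n. P n (\<alpha> n * M + \<beta> n) > (v+1)/2) sequentially"
    using HU[OF M(2)] UM by (intro order_tendstoD) auto
  have e2: "eventually (\<lambda>n. P n (\<gamma> n * y + \<delta> n) < (v+1)/2) sequentially"
    using HV v by (intro order_tendstoD) auto
  have "eventually (\<lambda>n. \<gamma> n * y + \<delta> n \<le> \<alpha> n * M + \<beta> n) sequentially"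
    using e1 e2
  proof eventually_elim
    case (elim n)
    show ?case
    proof (rule ccontr)
      assume "\<not> ?case"
      then have "P n (\<alpha> n * M + \<beta> n) \<le> P n (\<gamma> n * y + \<delta> n)"
        using monoP[of n] by (auto simp: mono_def)
      with elim show False by auto
    qed
  qed
  then show ?thesis by blast
qed

lemma bound_low:
  fixes P :: "nat \<Rightarrow> real \<Rightarrow> real"
  assumes monoP: "\<And>n. mono (P n)" and mono: "mono U" and bot: "(U \<longlongrightarrow> 0) at_bot"
    and HU: "\<And>u. isCont U u \<Longrightarrow> (\<lambda>n. P n (\<alpha> n * u + \<beta> n)) \<longlonglongrightarrow> U u"
    and HV: "(\<lambda>n. P n (\<gamma> n * y + \<delta> n)) \<longlonglongrightarrow> v" and v: "0 < v"
  shows "\<exists>M. eventually (\<lambda>n. \<alpha> n * M + \<beta> n \<le> \<gamma> n * y + \<delta> n) sequentially"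
proof -
  have "eventually (\<lambda>u. U u < v/2) at_bot"
    using bot v by (intro order_tendstoD) auto
  then obtain M0 where M0: "\<And>u. u \<le> M0 \<Longrightarrow> U u < v/2" by (auto simp: eventually_at_bot_linorder)
  obtain M where M: "M0 - 1 < M" "M < M0" "isCont U M" using good_cont[OF mono, of "M0 - 1" "M0"] by auto
  have UM: "U M < v/2" using M M0 by auto
  have e1: "eventually (\<lambda>n. P n (\<alpha> n * M + \<beta> n) < v/2) sequentially"
    using HU[OF M(3)] UM by (intro order_tendstoD) auto
  have e2: "eventually (\<lambda>n. P n (\<gamma> n * y + \<delta> n) > v/2) sequentially"
    using HV v by (intro order_tendstoD) auto
  have "eventually (\<lambda>n. \<alpha> n * M + \<beta> n \<le> \<gamma> n * y + \<delta> n) sequentially"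
    using e1 e2
  proof eventually_elim
    case (elim n)
    show ?case
    proof (rule ccontr)
      assume "\<not> ?case"
      then have "P n (\<gamma> n * y + \<delta> n) \<le> P n (\<alpha> n * M + \<beta> n)"
        using monoP[of n] by (auto simp: mono_def)
      with elim show False by auto
    qed
  qed
  then show ?thesis by blast
qed

lemma ineq_div:
  fixes a m b g y d :: real
  assumes "a > 0"
  shows "(a * m + b \<le> g * y + d) = (m \<le> (g / a) * y + (d - b) / a)"
    and "(g * y + d \<le> a * m + b) = ((g / a) * y + (d - b) / a \<le> m)"
proof -
  have e: "(g / a) * y + (d - b) / a = (g * y + d - b) / a" using assms by (simp add: field_simps)
  show "(a * m + b \<le> g * y + d) = (m \<le> (g / a) * y + (d - b) / a)"
    unfolding e using assms by (simp add: pos_le_divide_eq algebra_simps)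
  show "(g * y + d \<le> a * m + b) = ((g / a) * y + (d - b) / a \<le> m)"
    unfolding e using assms by (simp add: pos_divide_le_eq algebra_simps)
qed

lemma eps_eq:
  fixes x y :: real
  assumes "\<And>\<epsilon>. \<epsilon> > 0 \<Longrightarrow> \<bar>x - y\<bar> \<le> \<epsilon>"
  shows "x = y"
proof (rule ccontr)
  assume "x \<noteq> y"
  then have "\<bar>x - y\<bar> > 0" by auto
  from assms[OF half_gt_zero[OF this]] \<open>\<bar>x - y\<bar> > 0\<close> show False by auto
qed

lemma conv_types:
  fixes P :: "nat \<Rightarrow> real \<Rightarrow> real"
  assumes monoP: "\<And>n. mono (P n)" and U: "dfun U" and V: "dfun V"
   and \<alpha>: "\<And>n. \<alpha> n > 0" and \<gamma>: "\<And>n. \<gamma> n > 0"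
   and HU: "\<And>u. isCont U u \<Longrightarrow> (\<lambda>n. P n (\<alpha> n * u + \<beta> n)) \<longlonglongrightarrow> U u"
   and HV: "\<And>y. isCont V y \<Longrightarrow> (\<lambda>n. P n (\<gamma> n * y + \<delta> n)) \<longlonglongrightarrow> V y"
  shows "\<exists>A>0. \<exists>B. \<forall>y. V y = U (A*y+B)"
proof -
  have monoU: "mono U" and rcU: "\<And>y. continuous (at_right y) U" and botU: "(U \<longlongrightarrow> 0) at_bot"
    and topU: "(U \<longlongrightarrow> 1) at_top" using U by (auto simp: dfun_def)
  have monoV: "mono V" and rcV: "\<And>y. continuous (at_right y) V" and botV: "(V \<longlongrightarrow> 0) at_bot"
    and topV: "(V \<longlongrightarrow> 1) at_top" using V by (auto simp: dfun_def)
  obtain y1 y2 where y: "y1 < y2" "isCont V y1" "isCont V y2" "0 < V y1" "V y1 < 1" "0 < V y2" "V y2 < 1"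
    using good_V[OF V] by blast
  obtain u1 u2 where u: "u1 < u2" "isCont U u1" "isCont U u2" "0 < U u1" "U u1 < 1" "0 < U u2" "U u2 < 1"
    using good_V[OF U] by blast
  obtain m1 where m1: "eventually (\<lambda>n. \<alpha> n * m1 + \<beta> n \<le> \<gamma> n * y1 + \<delta> n) sequentially"
    using bound_low[OF monoP monoU botU HU HV[OF y(2)] y(4)] by blast
  obtain M2 where M2: "eventually (\<lambda>n. \<gamma> n * y2 + \<delta> n \<le> \<alpha> n * M2 + \<beta> n) sequentially"
    using bound_up[OF monoP monoU topU HU HV[OF y(3)] y(7)] by blast
  obtain m1' where m1': "eventually (\<lambda>n. \<gamma> n * m1' + \<delta> n \<le> \<alpha> n * u1 + \<beta> n) sequentially"
    using bound_low[OF monoP monoV botV HV HU[OF u(2)] u(4)] by blast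
  obtain M2' where M2': "eventually (\<lambda>n. \<alpha> n * u2 + \<beta> n \<le> \<gamma> n * M2' + \<delta> n) sequentially"
    using bound_up[OF monoP monoV topV HV HU[OF u(3)] u(7)] by blast
  define c where "c n = \<gamma> n / \<alpha> n" for n
  define e where "e n = (\<delta> n - \<beta> n) / \<alpha> n" for n
  have cpos: "c n > 0" for n using \<alpha> \<gamma> by (simp add: c_def)
  have ev: "eventually (\<lambda>n. m1 \<le> c n * y1 + e n \<and> c n * y2 + e n \<le> M2 \<and>
      c n * m1' + e n \<le> u1 \<and> u2 \<le> c n * M2' + e n) sequentially"
    using m1 M2 m1' M2'
  proof eventually_elim
    case (elim n)
    have a: "\<alpha> n > 0" by (rule \<alpha>)
    have 1: "m1 \<le> c n * y1 + e n"
      using ineq_div(1)[OF a, of m1 "\<beta> n" "\<gamma> n" y1 "\<delta> n"] elim(1) unfolding c_def e_def by blast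
    have 2: "c n * y2 + e n \<le> M2"
      using ineq_div(2)[OF a, of "\<gamma> n" y2 "\<delta> n" M2 "\<beta> n"] elim(2) unfolding c_def e_def by blast
    have 3: "c n * m1' + e n \<le> u1"
      using ineq_div(2)[OF a, of "\<gamma> n" m1' "\<delta> n" u1 "\<beta> n"] elim(3) unfolding c_def e_def by blast
    have 4: "u2 \<le> c n * M2' + e n"
      using ineq_div(1)[OF a, of u2 "\<beta> n" "\<gamma> n" M2' "\<delta> n"] elim(4) unfolding c_def e_def by blast
    show ?case using 1 2 3 4 by blast
  qed
  then obtain N where N: "\<And>n. n \<ge> N \<Longrightarrow> m1 \<le> c n * y1 + e n \<and> c n * y2 + e n \<le> M2 \<and>
      c n * m1' + e n \<le> u1 \<and> u2 \<le> c n * M2' + e n"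
    by (auto simp: eventually_sequentially)
  define C where "C = (M2 - m1) / (y2 - y1)"
  define c0 where "c0 = (u2 - u1) / (M2' - m1')"
  define E where "E = \<bar>m1\<bar> + \<bar>M2\<bar> + C * (\<bar>y1\<bar> + \<bar>y2\<bar>)"
  have Mm: "M2' - m1' > 0"
  proof -
    from N[of N] have "u2 - u1 \<le> c N * (M2' - m1')" by (simp add: algebra_simps)
    then have "c N * (M2' - m1') > 0" using u(1) by linarith
    then show ?thesis using cpos[of N] by (simp add: zero_less_mult_iff)
  qed
  have c0pos: "c0 > 0" using Mm u(1) by (simp add: c0_def)
  have cb: "c0 \<le> c n \<and> c n \<le> C" if "n \<ge> N" for n
  proof -
    from N[OF that] have 1: "u2 - u1 \<le> c n * (M2' - m1')" and 2: "c n * (y2 - y1) \<le> M2 - m1"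
      by (simp_all add: algebra_simps)
    show ?thesis using 1 2 Mm y(1) by (simp add: c0_def C_def field_simps)
  qed
  have eb: "- E \<le> e n \<and> e n \<le> E" if "n \<ge> N" for n
  proof -
    from N[OF that] have 1: "m1 - c n * y1 \<le> e n" and 2: "e n \<le> M2 - c n * y2" by auto
    have "\<bar>c n * y1\<bar> \<le> C * \<bar>y1\<bar>" "\<bar>c n * y2\<bar> \<le> C * \<bar>y2\<bar>"
      using cb[OF that] cpos[of n] by (auto simp: abs_mult intro!: mult_right_mono)
    moreover have "c n * y1 \<le> \<bar>c n * y1\<bar>" "- (c n * y2) \<le> \<bar>c n * y2\<bar>"
      "m1 \<ge> - \<bar>m1\<bar>" "M2 \<le> \<bar>M2\<bar>" by auto
    ultimately show ?thesis using 1 2 unfolding E_def distrib_left by linarith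
  qed
  define X where "X k = (c (k + N), e (k + N))" for k
  have XK: "X k \<in> {c0..C} \<times> {-E..E}" for k using cb[of "k+N"] eb[of "k+N"] by (auto simp: X_def)
  have "seq_compact ({c0..C} \<times> {-E..E})"
    by (intro compact_imp_seq_compact compact_Times compact_Icc)
  then obtain l r where l: "l \<in> {c0..C} \<times> {-E..E}" and r: "strict_mono r" and lim: "(X \<circ> r) \<longlonglongrightarrow> l"
    using XK unfolding seq_compact_def by meson
  obtain cc ee where l_eq: "l = (cc, ee)" by (cases l)
  have ccpos: "cc > 0" using l l_eq c0pos by auto
  define s where "s k = r k + N" for k
  have s: "strict_mono s" using r by (simp add: strict_mono_def s_def)
  have cl: "(\<lambda>k. c (s k)) \<longlonglongrightarrow> cc" and el: "(\<lambda>k. e (s k)) \<longlonglongrightarrow> ee"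
    using tendsto_fst[OF lim] tendsto_snd[OF lim] by (simp_all add: l_eq X_def s_def o_def)
  have HUs: "(\<lambda>k. P (s k) (\<alpha> (s k) * u + \<beta> (s k))) \<longlonglongrightarrow> U u" if "isCont U u" for u
    using LIMSEQ_subseq_LIMSEQ[OF HU[OF that] s] by (simp add: o_def)
  have HVs: "(\<lambda>k. P (s k) (\<gamma> (s k) * y + \<delta> (s k))) \<longlonglongrightarrow> V y" if "isCont V y" for y
    using LIMSEQ_subseq_LIMSEQ[OF HV[OF that] s] by (simp add: o_def)
  have aff: "\<alpha> n * (c n * y + e n) + \<beta> n = \<gamma> n * y + \<delta> n" for n y
    using \<alpha>[of n] by (simp add: c_def e_def field_simps)
  have claim3: "V y = U (cc * y + ee)" if cV: "isCont V y" and cU: "isCont U (cc * y + ee)" for y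
  proof (rule eps_eq)
    fix \<epsilon> :: real assume \<epsilon>: "\<epsilon> > 0"
    define z where "z = cc * y + ee"
    obtain d where d: "d > 0" "\<And>x'. dist x' z < d \<Longrightarrow> dist (U x') (U z) < \<epsilon>"
      using cU \<epsilon> unfolding continuous_at_eps_delta z_def by blast
    obtain v1 where v1: "z - d < v1" "v1 < z" "isCont U v1" using good_cont[OF monoU, of "z-d" z] d by auto
    obtain v2 where v2: "z < v2" "v2 < z + d" "isCont U v2" using good_cont[OF monoU, of z "z+d"] d by auto
    have wl: "(\<lambda>k. c (s k) * y + e (s k)) \<longlonglongrightarrow> z"
      unfolding z_def by (intro tendsto_intros cl el)
    have ew: "eventually (\<lambda>k. v1 < c (s k) * y + e (s k) \<and> c (s k) * y + e (s k) < v2) sequentially"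
      using order_tendstoD(1)[OF wl v1(2)] order_tendstoD(2)[OF wl v2(1)] by eventually_elim auto
    have "U v1 \<le> V y"
    proof (rule LIMSEQ_le[OF HUs[OF v1(3)] HVs[OF cV]])
      show "\<exists>N. \<forall>n\<ge>N. P (s n) (\<alpha> (s n) * v1 + \<beta> (s n)) \<le> P (s n) (\<gamma> (s n) * y + \<delta> (s n))"
        using ew unfolding eventually_sequentially
      proof (elim exE, intro exI allI impI)
        fix N' n assume H: "\<forall>n\<ge>N'. v1 < c (s n) * y + e (s n) \<and> c (s n) * y + e (s n) < v2" "N' \<le> n"
        then have "\<alpha> (s n) * v1 + \<beta> (s n) \<le> \<alpha> (s n) * (c (s n) * y + e (s n)) + \<beta> (s n)"
          using \<alpha>[of "s n"] by auto
        then show "P (s n) (\<alpha> (s n) * v1 + \<beta> (s n)) \<le> P (s n) (\<gamma> (s n) * y + \<delta> (s n))"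
          using monoP[of "s n"] by (simp add: aff mono_def)
      qed
    qed
    moreover have "V y \<le> U v2"
    proof (rule LIMSEQ_le[OF HVs[OF cV] HUs[OF v2(3)]])
      show "\<exists>N. \<forall>n\<ge>N. P (s n) (\<gamma> (s n) * y + \<delta> (s n)) \<le> P (s n) (\<alpha> (s n) * v2 + \<beta> (s n))"
        using ew unfolding eventually_sequentially
      proof (elim exE, intro exI allI impI)
        fix N' n assume H: "\<forall>n\<ge>N'. v1 < c (s n) * y + e (s n) \<and> c (s n) * y + e (s n) < v2" "N' \<le> n"
        then have "\<alpha> (s n) * (c (s n) * y + e (s n)) + \<beta> (s n) \<le> \<alpha> (s n) * v2 + \<beta> (s n)"
          using \<alpha>[of "s n"] by auto
        then show "P (s n) (\<gamma> (s n) * y + \<delta> (s n)) \<le> P (s n) (\<alpha> (s n) * v2 + \<beta> (s n))"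
          using monoP[of "s n"] by (simp add: aff mono_def)
      qed
    qed
    moreover have "dist (U v1) (U z) < \<epsilon>" "dist (U v2) (U z) < \<epsilon>"
      using d(2)[of v1] d(2)[of v2] v1 v2 by (auto simp: dist_real_def)
    ultimately show "\<bar>V y - U (cc * y + ee)\<bar> \<le> \<epsilon>"
      unfolding z_def[symmetric] by (auto simp: dist_real_def)
  qed
  have "V y = U (cc * y + ee)" for y
  proof (rule eps_eq)
    fix \<epsilon> :: real assume \<epsilon>: "\<epsilon> > 0"
    define z where "z = cc * y + ee"
    have "\<forall>\<epsilon>>0. \<exists>\<delta>>0. V (y + \<delta>) - V y < \<epsilon>"
      using rcV[of y] continuous_at_right_real_increasing[of V y] monoV by (auto simp: mono_def)
    then obtain d1 where d1: "d1 > 0" "V (y + d1) - V y < \<epsilon>" using \<epsilon> by blast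
    have "\<forall>\<epsilon>>0. \<exists>\<delta>>0. U (z + \<delta>) - U z < \<epsilon>"
      using rcU[of z] continuous_at_right_real_increasing[of U z] monoU by (auto simp: mono_def)
    then obtain d2 where d2: "d2 > 0" "U (z + d2) - U z < \<epsilon>" using \<epsilon> by blast
    define S where "S = {x. \<not> isCont V x} \<union> (\<lambda>u. (u - ee) / cc) ` {u. \<not> isCont U u}"
    have "countable S" unfolding S_def
      using mono_ctble_discont[OF monoV] mono_ctble_discont[OF monoU] by auto
    then obtain y' where y': "y < y'" "y' < y + min d1 (d2 / cc)" "y' \<notin> S"
      using good_pt[of S y "y + min d1 (d2/cc)"] d1 d2 ccpos by auto
    have cV: "isCont V y'" using y' by (auto simp: S_def)
    have cU: "isCont U (cc * y' + ee)"
    proof (rule ccontr)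
      assume "\<not> ?thesis"
      then have "((cc * y' + ee) - ee) / cc \<in> S" unfolding S_def by blast
      then show False using y' ccpos by simp
    qed
    have eq: "V y' = U (cc * y' + ee)" by (rule claim3[OF cV cU])
    have "V y \<le> V y'" "V y' \<le> V (y + d1)" using y' monoV by (auto simp: mono_def)
    moreover have "z \<le> cc * y' + ee" "cc * y' + ee \<le> z + d2"
    proof -
      show "z \<le> cc * y' + ee" using y' ccpos by (simp add: z_def)
      have "cc * y' \<le> cc * (y + d2 / cc)" using y' ccpos by (intro mult_left_mono) auto
      moreover have "cc * (y + d2 / cc) = cc * y + d2" using ccpos by (simp add: field_simps)
      ultimately show "cc * y' + ee \<le> z + d2" by (simp add: z_def)
    qed
    then have "U z \<le> U (cc * y' + ee)" "U (cc * y' + ee) \<le> U (z + d2)" using monoU by (auto simp: mono_def)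
    ultimately show "\<bar>V y - U (cc * y + ee)\<bar> \<le> \<epsilon>" using d1 d2 eq unfolding z_def by linarith
  qed
  then show ?thesis using ccpos by blast
qed



lemma powr_cont_at:
  fixes f :: "real \<Rightarrow> real"
  assumes "(f \<longlongrightarrow> f y) F" "\<And>x. f x \<ge> 0" "r > 0"
  shows "((\<lambda>x. f x powr r) \<longlongrightarrow> f y powr r) F"
  by (rule tendsto_powr') (use assms in auto)

lemma cdf_dfun:
  assumes "real_distribution Z" "nondegenerate Z"
  shows "dfun (cdf Z)"
proof -
  interpret Z: real_distribution Z by fact
  let ?G = "cdf Z"
  have ndg: "\<exists>y. 0 < ?G y \<and> ?G y < 1"
  proof (rule ccontr)
    assume H: "\<not> ?thesis"
    have G01: "?G y = 0 \<or> ?G y = 1" for y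
    proof -
      have "\<not> (0 < ?G y \<and> ?G y < 1)" using H by blast
      then show ?thesis using Z.cdf_nonneg[of y] Z.cdf_bounded_prob[of y] by linarith
    qed
    define S where "S = {y. ?G y = 1}"
    have "eventually (\<lambda>y. ?G y > 1/2) at_top"
      using Z.cdf_lim_at_top_prob by (intro order_tendstoD) auto
    then obtain y1 where y1: "?G y1 > 1/2" by (auto simp: eventually_at_top_linorder)
    have "eventually (\<lambda>y. ?G y < 1/2) at_bot"
      using Z.cdf_lim_at_bot by (intro order_tendstoD) auto
    then obtain y0 where y0: "\<And>y. y \<le> y0 \<Longrightarrow> ?G y < 1/2" by (auto simp: eventually_at_bot_linorder)
    have Sne: "y1 \<in> S" using y1 G01[of y1] by (auto simp: S_def)
    have Sbd: "y0 \<le> s" if "s \<in> S" for s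
    proof (rule ccontr)
      assume "\<not> y0 \<le> s"
      then have "?G s < 1/2" using y0[of s] by auto
      with that show False by (simp add: S_def)
    qed
    have bdd: "bdd_below S" using Sbd by (intro bdd_belowI) 
    define c where "c = Inf S"
    have cle: "c \<le> s" if "s \<in> S" for s unfolding c_def using that bdd by (intro cInf_lower)
    have below: "?G y = 0" if "y < c" for y
    proof -
      have "y \<notin> S" using cle that by force
      then show ?thesis using G01[of y] by (auto simp: S_def)
    qed
    have above: "?G y = 1" if "y > c" for y
    proof -
      have "\<exists>s\<in>S. s < y" unfolding c_def using that Sne by (subst cInf_less_iff[symmetric]) (use bdd in \<open>auto simp: c_def\<close>)
      then obtain s where "s \<in> S" "s < y" by blast
      then have "?G s \<le> ?G y" using Z.cdf_nondecreasing by auto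
      then show ?thesis using \<open>s \<in> S\<close> Z.cdf_bounded_prob[of y] by (auto simp: S_def)
    qed
    have Gc: "?G c = 1"
    proof -
      have "(?G \<longlongrightarrow> ?G c) (at_right c)" using Z.cdf_is_right_cont[of c] by (simp add: continuous_within)
      moreover have "eventually (\<lambda>y. ?G y = 1) (at_right c)"
        using above by (auto simp: eventually_at_right_field intro: exI[of _ "c+1"])
      ultimately have "((\<lambda>_. 1) \<longlongrightarrow> ?G c) (at_right c)" by (rule Lim_transform_eventually)
      then show ?thesis using tendsto_unique[OF trivial_limit_at_right_real _ tendsto_const] by metis
    qed
    have Gl: "measure Z {..<c} = 0"
    proof -
      have "eventually (\<lambda>y. ?G y = 0) (at_left c)"
        using below by (auto simp: eventually_at_left_field intro: exI[of _ "c-1"])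
      then have "((\<lambda>_. 0) \<longlongrightarrow> measure Z {..<c}) (at_left c)"
        using Z.cdf_at_left[of c] by (rule Lim_transform_eventually[rotated])
      then show ?thesis using tendsto_unique[OF trivial_limit_at_left_real _ tendsto_const] by metis
    qed
    have "measure Z {..c} = measure Z {..<c} + measure Z {c}"
      by (subst Z.finite_measure_Union[symmetric]) (auto intro!: arg_cong[where f="measure Z"])
    then have "measure Z {c} = 1" using Gc Gl by (simp add: cdf_def)
    with assms(2) show False by (auto simp: nondegenerate_def dest: spec[of _ c])
  qed
  show ?thesis unfolding dfun_def
    using ndg Z.cdf_is_right_cont Z.cdf_lim_at_bot Z.cdf_lim_at_top_prob
    by (auto simp: mono_def Z.cdf_nondecreasing)
qed

lemma dfun_powr:
  assumes "dfun G" "t > 0" "\<And>y. G y \<ge> 0"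
  shows "dfun (\<lambda>y. G y powr t)"
proof -
  have m: "mono G" and rc: "\<And>y. continuous (at_right y) G" and b: "(G \<longlongrightarrow> 0) at_bot"
    and tp: "(G \<longlongrightarrow> 1) at_top" and nd: "\<exists>y. 0 < G y \<and> G y < 1" using assms(1) by (auto simp: dfun_def)
  have "mono (\<lambda>y. G y powr t)" using m assms(2,3) by (auto simp: mono_def intro!: powr_mono2)
  moreover have "continuous (at_right y) (\<lambda>y. G y powr t)" for y
    using rc[of y] unfolding continuous_within by (intro powr_cont_at) (use assms in auto)
  moreover have "((\<lambda>y. G y powr t) \<longlongrightarrow> 0) at_bot"
    using tendsto_powr'[OF b tendsto_const[of t]] assms by auto
  moreover have "((\<lambda>y. G y powr t) \<longlongrightarrow> 1) at_top"
    using tendsto_powr'[OF tp tendsto_const[of t]] assms by auto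
  moreover have "\<exists>y. 0 < G y powr t \<and> G y powr t < 1"
  proof -
    obtain y where "0 < G y" "G y < 1" using nd by blast
    then show ?thesis using assms(2) by (intro exI[of _ y]) (use powr_less_mono2[of t "G y" 1] in auto)
  qed
  ultimately show ?thesis unfolding dfun_def by blast
qed

lemma pow_as_powr:
  fixes x :: real
  assumes "x \<ge> 0" "m \<ge> 1"
  shows "x ^ m = (x ^ Suc n) powr (real m / real (Suc n))"
proof (cases "x = 0")
  case True then show ?thesis using assms by (simp add: power_0_left)
next
  case False
  then have x: "x > 0" using assms by auto
  have "(x ^ Suc n) powr (real m / real (Suc n)) = (x powr real (Suc n)) powr (real m / real (Suc n))"
    using x by (simp only: powr_realpow)
  also have "\<dots> = x powr real m" by (simp add: powr_powr)
  also have "\<dots> = x ^ m" using x by (simp add: powr_realpow)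
  finally show ?thesis by simp
qed

lemma max_stable_pow:
  assumes ms: "max_stable Z" and t: "t > 0"
  shows "\<exists>A>0. \<exists>B. \<forall>y. cdf Z y powr t = cdf Z (A*y+B)"
proof -
  obtain N a b where Z: "real_distribution Z" "nondegenerate Z" and N: "real_distribution N"
    and a: "\<And>n. a n > 0" and wc: "weak_conv_m (\<lambda>n. distr (PiM {..<Suc n} (\<lambda>_. N)) borel
                 (\<lambda>x. a n * Max (x ` {..<Suc n}) - b n)) Z"
    using ms unfolding max_stable_def by blast
  interpret Z: real_distribution Z by fact
  interpret N: real_distribution N by fact
  define G where "G = cdf Z"
  define F where "F = cdf N"
  have H: "(\<lambda>n. F ((y + b n) / a n) ^ Suc n) \<longlonglongrightarrow> G y" if "isCont G y" for y
    using wc that unfolding weak_conv_m_def weak_conv_def G_def F_def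
    by (simp add: cdf_max[OF N a])
  have G0: "G y \<ge> 0" for y by (simp add: G_def Z.cdf_nonneg)
  have dG: "dfun G" unfolding G_def by (rule cdf_dfun[OF Z])
  define m where "m n = nat \<lceil>t * real (Suc n)\<rceil>" for n
  have mlow: "t * real (Suc n) \<le> real (m n)" for n unfolding m_def by linarith
  have mup: "real (m n) \<le> t * real (Suc n) + 1" for n
  proof -
    have "t * real (Suc n) > 0" using t by auto
    then have "real (m n) = real_of_int \<lceil>t * real (Suc n)\<rceil>" unfolding m_def by (simp add: of_nat_nat)
    then show ?thesis using of_int_ceiling_le_add_one[of "t * real (Suc n)"] by linarith
  qed
  have m1: "m n \<ge> 1" for n
  proof -
    have "t * real (Suc n) > 0" using t by auto
    then show ?thesis using mlow[of n] by linarith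
  qed
  define k where "k n = m n - 1" for n
  have Sk: "Suc (k n) = m n" for n using m1[of n] by (simp add: k_def)
  have kinf: "filterlim k at_top sequentially"
    unfolding filterlim_at_top
  proof
    fix K :: nat
    obtain M :: nat where M: "real M \<ge> (real K + 1) / t" using real_arch_simple by blast
    show "eventually (\<lambda>n. K \<le> k n) sequentially"
      unfolding eventually_sequentially
    proof (intro exI allI impI)
      fix n assume "M \<le> n"
      then have "real K + 1 \<le> t * real M" using M t by (simp add: field_simps)
      also have "\<dots> \<le> t * real (Suc n)" using \<open>M \<le> n\<close> t by auto
      also have "\<dots> \<le> real (m n)" by (rule mlow)
      finally have "K + 1 \<le> m n" by linarith
      then show "K \<le> k n" by (simp add: k_def)
    qed
  qed
  define P where "P n u = F u ^ m n" for n u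
  have monoP: "mono (P n)" for n
    unfolding P_def mono_def F_def by (auto intro!: power_mono N.cdf_nondecreasing N.cdf_nonneg)
  have HU: "(\<lambda>n. P n ((1 / a (k n)) * u + b (k n) / a (k n))) \<longlonglongrightarrow> G u" if "isCont G u" for u
  proof -
    have "(\<lambda>n. F ((u + b (k n)) / a (k n)) ^ Suc (k n)) \<longlonglongrightarrow> G u"
      using filterlim_compose[OF H[OF that] kinf] by simp
    moreover have "P n ((1 / a (k n)) * u + b (k n) / a (k n)) = F ((u + b (k n)) / a (k n)) ^ Suc (k n)" for n
      unfolding P_def Sk by (simp add: add_divide_distrib)
    ultimately show ?thesis by simp
  qed
  have elim: "(\<lambda>n. real (m n) / real (Suc n)) \<longlonglongrightarrow> t"
  proof (rule tendsto_sandwich)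
    show "eventually (\<lambda>n. t \<le> real (m n) / real (Suc n)) sequentially"
      using mlow by (simp add: pos_le_divide_eq)
    show "eventually (\<lambda>n. real (m n) / real (Suc n) \<le> t + 1 / real (Suc n)) sequentially"
    proof (intro always_eventually allI)
      fix n
      have "real (m n) / real (Suc n) \<le> (t * real (Suc n) + 1) / real (Suc n)"
        using mup[of n] by (intro divide_right_mono) auto
      also have "\<dots> = t + 1 / real (Suc n)" by (simp add: field_simps)
      finally show "real (m n) / real (Suc n) \<le> t + 1 / real (Suc n)" .
    qed
    have "(\<lambda>n. 1 / real (Suc n)) \<longlonglongrightarrow> 0"
      using LIMSEQ_Suc[OF lim_1_over_n] by simp
    then show "(\<lambda>n. t + 1 / real (Suc n)) \<longlonglongrightarrow> t" using tendsto_add[OF tendsto_const[of t]] by fastforce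
  qed simp
  have HV: "(\<lambda>n. P n ((1 / a n) * y + b n / a n)) \<longlonglongrightarrow> G y powr t" if "isCont (\<lambda>y. G y powr t) y" for y
  proof -
    have "((\<lambda>y. G y powr t) \<longlongrightarrow> G y powr t) (at y)" using that by (simp add: continuous_at)
    then have "((\<lambda>y. (G y powr t) powr (1/t)) \<longlongrightarrow> (G y powr t) powr (1/t)) (at y)"
      by (rule powr_cont_at[where f="\<lambda>y. G y powr t"]) (use t in auto)
    then have "isCont (\<lambda>y. (G y powr t) powr (1/t)) y" by (simp add: continuous_at)
    moreover have "(G y powr t) powr (1/t) = G y" for y using t G0[of y] by (simp add: powr_powr)
    ultimately have cG: "isCont G y" by simp
    have F0: "F x ^ Suc n \<ge> 0" for x n by (simp add: F_def N.cdf_nonneg)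
    have "(\<lambda>n. (F ((y + b n) / a n) ^ Suc n) powr (real (m n) / real (Suc n))) \<longlonglongrightarrow> G y powr t"
      by (rule tendsto_powr'[OF H[OF cG] elim]) (use t F0 in auto)
    moreover have "P n ((1 / a n) * y + b n / a n) = (F ((y + b n) / a n) ^ Suc n) powr (real (m n) / real (Suc n))" for n
      unfolding P_def using pow_as_powr[OF _ m1[of n], of "F ((y + b n) / a n)" n]
      by (simp add: add_divide_distrib F_def N.cdf_nonneg)
    ultimately show ?thesis by simp
  qed
  have "\<exists>A>0. \<exists>B. \<forall>y. G y powr t = G (A*y+B)"
    by (rule conv_types[OF monoP dG dfun_powr[OF dG t G0] _ _ HU HV]) (use a in auto)
  then show ?thesis unfolding G_def .
qed



lemma measure_gt:
  assumes "real_distribution Z"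
  shows "measure Z {u<..} = 1 - cdf Z u"
proof -
  interpret Z: real_distribution Z by fact
  have "{u<..} = UNIV - {..u}" by auto
  then show ?thesis using Z.prob_compl[of "{..u}"] by (simp add: cdf_def)
qed

lemma ev_prod:
  assumes "real_distribution Z" "finite I" "\<And>i. i \<in> I \<Longrightarrow> A i \<in> sets borel"
  shows "{x\<in>space (PiM I (\<lambda>_. Z)). \<forall>i\<in>I. x i \<in> A i} \<in> sets (PiM I (\<lambda>_. Z))"
proof -
  interpret Z: real_distribution Z by fact
  have "{x\<in>space (PiM I (\<lambda>_. Z)). \<forall>i\<in>I. x i \<in> A i} = PiE I A"
    by (auto simp: space_PiM PiE_def Pi_def)
  moreover have "PiE I A \<in> sets (PiM I (\<lambda>_. Z))"
    using assms by (intro sets_PiM_I_finite) auto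
  ultimately show ?thesis by simp
qed

lemma lt2: "{..<2::nat} = {0,1}" by auto

lemma tail2:
  assumes Z: "real_distribution Z" and D: "D_minus Z" and uw: "u + w \<le> 2 * t"
  shows "1 - cdf Z t \<le> 2 * (1 - cdf Z u) + (1 - cdf Z w)^2"
proof -
  interpret Z: real_distribution Z by fact
  let ?P = "PiM {..<2::nat} (\<lambda>_. Z)"
  let ?f = "\<lambda>x. \<Sum>i<2::nat. (\<lambda>_. 1/2::real) i * x i"
  interpret P: prob_space ?P by (rule prob_space_PiM) (simp add: Z.prob_space_axioms)
  have sp: "space ?P = {..<2::nat} \<rightarrow>\<^sub>E UNIV" by (simp add: space_PiM)
  have fm: "?f \<in> borel_measurable ?P" by measurable
  have "stoch_le Z (distr ?P borel ?f)"
    using D unfolding D_minus_def by (elim allE[of _ 2] allE[of _ "\<lambda>_. 1/2"]) auto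
  then have "cdf (distr ?P borel ?f) t \<le> cdf Z t" unfolding stoch_le_def by auto
  also have "cdf (distr ?P borel ?f) t = measure ?P {x\<in>space ?P. ?f x \<le> t}"
    unfolding cdf_def using fm by (simp add: measure_distr vimage_def Int_def conj_commute)
  finally have c1: "measure ?P {x\<in>space ?P. ?f x \<le> t} \<le> cdf Z t" .
  have 1: "1 - cdf Z t \<le> measure ?P {x\<in>space ?P. \<not> ?f x \<le> t}"
  proof -
    have "space ?P - {x\<in>space ?P. ?f x \<le> t} = {x\<in>space ?P. \<not> ?f x \<le> t}" by auto
    moreover have "{x\<in>space ?P. ?f x \<le> t} \<in> P.events" using fm by measurable
    ultimately have "measure ?P {x\<in>space ?P. \<not> ?f x \<le> t} = 1 - measure ?P {x\<in>space ?P. ?f x \<le> t}"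
      using P.prob_compl[of "{x\<in>space ?P. ?f x \<le> t}"] by simp
    then show ?thesis using c1 by linarith
  qed
  define E1 where "E1 = {x\<in>space ?P. \<forall>i\<in>{..<2}. x i \<in> (if i = 0 then {u<..} else UNIV)}"
  define E2 where "E2 = {x\<in>space ?P. \<forall>i\<in>{..<2}. x i \<in> (if i = 1 then {u<..} else UNIV)}"
  define E3 where "E3 = {x\<in>space ?P. \<forall>i\<in>{..<2::nat}. x i \<in> {w<..}}"
  have sub: "{x\<in>space ?P. \<not> ?f x \<le> t} \<subseteq> E1 \<union> E2 \<union> E3"
  proof
    fix x assume x: "x \<in> {x\<in>space ?P. \<not> ?f x \<le> t}"
    then have s: "x 0 + x 1 > 2 * t" by (simp add: numeral_2_eq_2)
    have "x 0 > u \<or> x 1 > u \<or> (x 0 > w \<and> x 1 > w)" using s uw by linarith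
    then show "x \<in> E1 \<union> E2 \<union> E3" using x
      unfolding E1_def E2_def E3_def lt2 by auto
  qed
  have m1: "measure ?P E1 = 1 - cdf Z u"
    unfolding E1_def by (subst prod_meas) (auto simp: Z.prob_space_axioms numeral_2_eq_2 lessThan_Suc measure_gt[OF Z] Z.prob_space[unfolded Z.space_eq_univ])
  have m2: "measure ?P E2 = 1 - cdf Z u"
    unfolding E2_def by (subst prod_meas) (auto simp: Z.prob_space_axioms numeral_2_eq_2 lessThan_Suc measure_gt[OF Z] Z.prob_space[unfolded Z.space_eq_univ])
  have m3: "measure ?P E3 = (1 - cdf Z w)^2"
    unfolding E3_def by (subst prod_meas) (auto simp: Z.prob_space_axioms numeral_2_eq_2 lessThan_Suc measure_gt[OF Z] power2_eq_square)
  have ev: "E1 \<in> P.events" "E2 \<in> P.events" "E3 \<in> P.events"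
    unfolding E1_def E2_def E3_def by (intro ev_prod[OF Z]; simp)+
  note 1
  also have "measure ?P {x\<in>space ?P. \<not> ?f x \<le> t} \<le> measure ?P (E1 \<union> E2 \<union> E3)"
    using sub ev by (intro P.finite_measure_mono) auto
  also have "\<dots> \<le> measure ?P (E1 \<union> E2) + measure ?P E3"
    using ev by (intro measure_subadditive) (auto simp: P.emeasure_eq_measure)
  also have "\<dots> \<le> measure ?P E1 + measure ?P E2 + measure ?P E3"
    using ev measure_subadditive[of E1 ?P E2] by (auto simp: P.emeasure_eq_measure)
  also have "\<dots> = 2 * (1 - cdf Z u) + (1 - cdf Z w)^2" using m1 m2 m3 by simp
  finally show ?thesis .
qed



lemma sq01: fixes x :: real assumes "0 \<le> x" "x \<le> 1" "x \<le> x^2" shows "x = 0 \<or> x = 1"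
proof -
  have "x * (x - 1) \<ge> 0" using assms(3) by (simp add: power2_eq_square algebra_simps)
  moreover have "x * (x - 1) \<le> 0" using assms(1,2) by (simp add: mult_nonneg_nonpos)
  ultimately have "x * (x - 1) = 0" by linarith
  then show ?thesis by auto
qed

lemma not01:
  assumes "dfun G" "\<And>y. G y = 0 \<or> G y = 1" shows False
proof -
  obtain y where "0 < G y" "G y < 1" using assms(1) unfolding dfun_def by blast
  with assms(2)[of y] show False by auto
qed

lemma no_gumbel:
  fixes G :: "real \<Rightarrow> real"
  assumes dG: "dfun G" and G01: "\<And>y. 0 \<le> G y \<and> G y \<le> 1"
    and K: "\<And>t u w. u + w \<le> 2 * t \<Longrightarrow> 1 - G t \<le> 2 * (1 - G u) + (1 - G w)^2"
    and \<beta>: "\<beta> > 0" and eq: "\<And>y. G (y - \<beta>) = G y ^ 2"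
  shows False
proof -
  have mono: "mono G" and top: "(G \<longlongrightarrow> 1) at_top" and bot: "(G \<longlongrightarrow> 0) at_bot"
    using dG by (auto simp: dfun_def)
  have pos: "G y > 0" for y
  proof (rule ccontr)
    assume "\<not> G y > 0"
    then have G0: "G y = 0" using G01[of y] by auto
    have Gj: "G (y + real j * \<beta>) = 0" for j
    proof (induction j)
      case (Suc j)
      have "G (y + real (Suc j) * \<beta>) ^ 2 = G (y + real j * \<beta>)"
        using eq[of "y + real (Suc j) * \<beta>"] by (simp add: algebra_simps)
      then show ?case using Suc by simp
    qed (simp add: G0)
    have "eventually (\<lambda>x. G x > 1/2) at_top" using top by (intro order_tendstoD) auto
    then obtain Y where Y: "\<And>x. x \<ge> Y \<Longrightarrow> G x > 1/2" by (auto simp: eventually_at_top_linorder)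
    obtain j :: nat where "real j \<ge> (Y - y) / \<beta>" using real_arch_simple by blast
    then have "y + real j * \<beta> \<ge> Y" using \<beta> by (simp add: field_simps)
    then show False using Y Gj by fastforce
  qed
  have lt1: "G y < 1" for y
  proof (rule ccontr)
    assume "\<not> G y < 1"
    then have G1: "G y = 1" using G01[of y] by auto
    have Gj: "G (y - real j * \<beta>) = 1" for j
    proof (induction j)
      case (Suc j)
      have "G (y - real (Suc j) * \<beta>) = G (y - real j * \<beta>) ^ 2"
        using eq[of "y - real j * \<beta>"] by (simp add: algebra_simps)
      then show ?case using Suc by simp
    qed (simp add: G1)
    have "eventually (\<lambda>x. G x < 1/2) at_bot" using bot by (intro order_tendstoD) auto
    then obtain Y where Y: "\<And>x. x \<le> Y \<Longrightarrow> G x < 1/2" by (auto simp: eventually_at_bot_linorder)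
    obtain j :: nat where "real j \<ge> (y - Y) / \<beta>" using real_arch_simple by blast
    then have "y - real j * \<beta> \<le> Y" using \<beta> by (simp add: field_simps)
    then show False using Y Gj by fastforce
  qed
  define q where "q y = 1 - G y" for y
  have qpos: "q y > 0" for y using lt1[of y] by (simp add: q_def)
  have qdown: "q (y - real j * \<beta>) \<le> 2 ^ j * q y" for y j
  proof (induction j)
    case (Suc j)
    have "q (y - real (Suc j) * \<beta>) = 1 - G (y - real j * \<beta>) ^ 2"
      using eq[of "y - real j * \<beta>"] by (simp add: q_def algebra_simps)
    also have "\<dots> = q (y - real j * \<beta>) * (1 + G (y - real j * \<beta>))"
      by (simp add: q_def power2_eq_square algebra_simps)
    also have "\<dots> \<le> q (y - real j * \<beta>) * 2"
      using G01[of "y - real j * \<beta>"] qpos[of "y - real j * \<beta>"] by (intro mult_left_mono) auto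
    also have "\<dots> \<le> 2 ^ j * q y * 2" using Suc by simp
    finally show ?case by simp
  qed simp
  have qup1: "q (y + \<beta>) \<le> 2/3 * q y" if "G y \<ge> 1/4" for y
  proof -
    define g where "g = G (y + \<beta>)"
    have gg: "g ^ 2 = G y" using eq[of "y + \<beta>"] by (simp add: g_def)
    have g0: "g \<ge> 0" using G01 by (simp add: g_def)
    have "g \<ge> 1/2"
    proof (rule ccontr)
      assume "\<not> g \<ge> 1/2"
      then have "g ^ 2 < (1/2)^2" using g0 by (intro power_strict_mono) auto
      then show False using gg that by (simp add: power2_eq_square)
    qed
    have "q y = (1 - g) * (1 + g)" using gg by (simp add: q_def power2_eq_square algebra_simps)
    moreover have "1 - g \<ge> 0" using G01[of "y+\<beta>"] by (simp add: g_def)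
    moreover have "(1 - g) * (3/2) \<le> (1 - g) * (1 + g)" using \<open>g \<ge> 1/2\<close> \<open>1 - g \<ge> 0\<close> by (intro mult_left_mono) auto
    ultimately have "q y \<ge> (1 - g) * (3/2)" by linarith
    then show ?thesis by (simp add: q_def g_def)
  qed
  have qup: "q (y + real j * \<beta>) \<le> (2/3) ^ j * q y" if "G y \<ge> 1/4" for y j
  proof (induction j)
    case (Suc j)
    have "G (y + real j * \<beta>) \<ge> 1/4"
      using that mono \<beta> by (smt (verit, best) monoD of_nat_0_le_iff zero_le_mult_iff)
    then have "q (y + real (Suc j) * \<beta>) \<le> 2/3 * q (y + real j * \<beta>)"
      using qup1[of "y + real j * \<beta>"] by (simp add: algebra_simps)
    also have "\<dots> \<le> 2/3 * ((2/3)^j * q y)" using Suc by simp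
    finally show ?case by simp
  qed simp
  have "eventually (\<lambda>x. G x > 1/4) at_top" using top by (intro order_tendstoD) auto
  then obtain y1 where y1: "\<And>x. x \<ge> y1 \<Longrightarrow> G x > 1/4" by (auto simp: eventually_at_top_linorder)
  have "eventually (\<lambda>x. G x > 1 - 1/1000) at_top" using top by (intro order_tendstoD) auto
  then obtain y2 where y2: "\<And>x. x \<ge> y2 \<Longrightarrow> G x > 1 - 1/1000" by (auto simp: eventually_at_top_linorder)
  define t where "t = max y1 y2"
  have t1: "G t \<ge> 1/4" using y1[of t] by (simp add: t_def)
  have t2: "q t < 1/1000" using y2[of t] by (simp add: t_def q_def)
  have "q t \<le> 2 * q (t + real 4 * \<beta>) + q (t - real 4 * \<beta>) ^ 2"
    using K[of "t + real 4 * \<beta>" "t - real 4 * \<beta>" t] by (simp add: q_def)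
  also have "\<dots> \<le> 2 * ((2/3)^4 * q t) + (2^4 * q t)^2"
    using qup[OF t1, of 4] qdown[of t 4] qpos[of "t - real 4 * \<beta>"]
    by (intro add_mono mult_left_mono power_mono) auto
  finally have "q t \<le> 32/81 * q t + 256 * (q t * q t)" by (simp add: power2_eq_square power_numeral_reduce)
  moreover have "256 * (q t * q t) < 256 * (q t * (1/1000))" using t2 qpos[of t] by auto
  ultimately show False using qpos[of t] by linarith
qed

lemma no_weibull:
  fixes G :: "real \<Rightarrow> real"
  assumes dG: "dfun G" and G01: "\<And>y. 0 \<le> G y \<and> G y \<le> 1"
    and K: "\<And>t u w. u + w \<le> 2 * t \<Longrightarrow> 1 - G t \<le> 2 * (1 - G u) + (1 - G w)^2"
    and A: "A > 1" and eq: "\<And>y. G y ^ 2 = G (ys + A * (y - ys))" and G1: "G ys = 1"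
  shows False
proof -
  have mono: "mono G" and top: "(G \<longlongrightarrow> 1) at_top" and bot: "(G \<longlongrightarrow> 0) at_bot"
    using dG by (auto simp: dfun_def)
  have lt1: "G y < 1" if "y < ys" for y
  proof (rule ccontr)
    assume "\<not> G y < 1"
    then have Gy: "G y = 1" using G01[of y] by auto
    have Gj: "G (ys + A ^ j * (y - ys)) = 1" for j
    proof (induction j)
      case (Suc j)
      have "G (ys + A ^ Suc j * (y - ys)) = G (ys + A ^ j * (y - ys)) ^ 2"
        using eq[of "ys + A ^ j * (y - ys)"] by (simp add: algebra_simps)
      then show ?case using Suc by simp
    qed (simp add: Gy)
    have "eventually (\<lambda>x. G x < 1/2) at_bot" using bot by (intro order_tendstoD) auto
    then obtain Y where Y: "\<And>x. x \<le> Y \<Longrightarrow> G x < 1/2" by (auto simp: eventually_at_bot_linorder)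
    obtain j where j: "(ys - Y) / (ys - y) < A ^ j" using real_arch_pow[OF A] by blast
    then have "ys - Y < A ^ j * (ys - y)" using that by (simp add: field_simps)
    then have "ys + A ^ j * (y - ys) \<le> Y" by (simp add: algebra_simps)
    then show False using Y Gj by fastforce
  qed
  obtain y0 where y0: "0 < G y0" "G y0 < 1" using dG unfolding dfun_def by blast
  have y0ys: "y0 < ys"
  proof (rule ccontr)
    assume "\<not> y0 < ys"
    then have "G ys \<le> G y0" using mono by (auto simp: mono_def)
    then show False using G1 y0 by simp
  qed
  have near1: "\<exists>y<ys. G y > c" if c: "0 \<le> c" "c < 1" for c
  proof (rule ccontr)
    assume H: "\<not> ?thesis"
    have bnd: "G y \<le> c ^ (2 ^ j)" if "y < ys" for y j
      using that
    proof (induction j arbitrary: y)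
      case 0 then show ?case using H by force
    next
      case (Suc j)
      define y' where "y' = ys + (y - ys) / A"
      have y': "y' < ys" using Suc.prems A by (simp add: y'_def field_simps)
      have "G y = G y' ^ 2" using eq[of y'] A by (simp add: y'_def)
      also have "\<dots> \<le> (c ^ (2 ^ j)) ^ 2" using Suc.IH[OF y'] G01[of y'] by (intro power_mono) auto
      also have "\<dots> = c ^ (2 ^ Suc j)" by (simp add: power_mult[symmetric] mult.commute)
      finally show ?case .
    qed
    obtain n where n: "c ^ n < G y0" using real_arch_pow_inv[OF y0(1) c(2)] by blast
    have "c ^ (2 ^ n) \<le> c ^ n" using c by (intro power_decreasing) (auto intro: less_imp_le[OF less_exp])
    then show False using bnd[OF y0ys, of n] n by linarith
  qed
  define q where "q y = 1 - G y" for y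
  have qA: "q (ys - A ^ j * s) \<le> 2 ^ j * q (ys - s)" for j s
  proof (induction j)
    case (Suc j)
    have "q (ys - A ^ Suc j * s) = 1 - G (ys - A ^ j * s) ^ 2"
      using eq[of "ys - A ^ j * s"] by (simp add: q_def algebra_simps)
    also have "\<dots> = q (ys - A ^ j * s) * (1 + G (ys - A ^ j * s))"
      by (simp add: q_def power2_eq_square algebra_simps)
    also have "\<dots> \<le> q (ys - A ^ j * s) * 2"
      using G01[of "ys - A ^ j * s"] by (intro mult_left_mono) (auto simp: q_def)
    also have "\<dots> \<le> 2 ^ j * q (ys - s) * 2" using Suc by simp
    finally show ?case by simp
  qed simp
  obtain k where k: "2 < A ^ k" using real_arch_pow[OF A] by blast
  obtain y1 where y1: "y1 < ys" "G y1 > 1 - 1 / 4 ^ k"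
    using near1[of "1 - 1 / 4 ^ k"] by auto
  define s where "s = ys - y1"
  have s: "s > 0" using y1 by (simp add: s_def)
  have qy1: "q y1 > 0" "q y1 < 1 / 4 ^ k" using lt1[OF y1(1)] y1(2) by (auto simp: q_def)
  have "q y1 \<le> 2 * q ys + q (2 * y1 - ys) ^ 2" using K[of ys "2 * y1 - ys" y1] by (simp add: q_def)
  also have "\<dots> = q (ys - 2 * s) ^ 2" using G1 by (simp add: q_def s_def algebra_simps)
  also have "\<dots> \<le> (2 ^ k * q y1) ^ 2"
  proof (intro power_mono)
    have "ys - A ^ k * s \<le> ys - 2 * s" using k s by (intro diff_left_mono mult_right_mono) auto
    then have "q (ys - 2 * s) \<le> q (ys - A ^ k * s)" using mono by (auto simp: q_def mono_def)
    also have "\<dots> \<le> 2 ^ k * q (ys - s)" by (rule qA)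
    finally show "q (ys - 2 * s) \<le> 2 ^ k * q y1" by (simp add: s_def)
    show "0 \<le> q (ys - 2 * s)" using G01 by (simp add: q_def)
  qed
  also have "\<dots> = 4 ^ k * q y1 * q y1" by (simp add: power2_eq_square power_mult_distrib[symmetric])
  finally have "q y1 \<le> 4 ^ k * q y1 * q y1" .
  then have "1 \<le> 4 ^ k * q y1" using qy1(1) by (simp add: mult.commute mult.left_commute)
  moreover have "4 ^ k * q y1 < 1" using qy1(2) by (simp add: field_simps)
  ultimately show False by linarith
qed



lemma periodic_const:
  fixes V :: "real \<Rightarrow> real"
  assumes anti: "\<And>x y. x \<le> y \<Longrightarrow> V y \<le> V x" and per: "\<And>x. V (x + \<delta>) = V x" and d: "\<delta> \<noteq> 0"
  shows "V x = V y"
proof -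
  have per': "V (x + real j * \<bar>\<delta>\<bar>) = V x" for x j
  proof (induction j)
    case (Suc j)
    have "V (x + real (Suc j) * \<bar>\<delta>\<bar>) = V (x + real j * \<bar>\<delta>\<bar>)"
    proof (cases "\<delta> > 0")
      case True
      then show ?thesis using per[of "x + real j * \<bar>\<delta>\<bar>"] by (simp add: algebra_simps)
    next
      case False
      then have "\<bar>\<delta>\<bar> = - \<delta>" using d by auto
      then show ?thesis using per[of "x + real (Suc j) * \<bar>\<delta>\<bar>"] by (simp add: algebra_simps)
    qed
    then show ?case using Suc by simp
  qed simp
  have le: "V w = V x" if "x \<le> w" for x w
  proof -
    obtain j :: nat where "real j \<ge> (w - x) / \<bar>\<delta>\<bar>" using real_arch_simple by blast
    then have "x + real j * \<bar>\<delta>\<bar> \<ge> w" using d by (simp add: field_simps)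
    then have "V (x + real j * \<bar>\<delta>\<bar>) \<le> V w" by (rule anti)
    moreover have "V w \<le> V x" using that by (rule anti)
    ultimately show ?thesis using per'[of x j] by linarith
  qed
  show ?thesis by (cases "x \<le> y") (use le in auto)
qed

lemma additive_linear:
  fixes g :: "real \<Rightarrow> real"
  assumes add: "\<And>x y. g (x + y) = g x + g y" and anti: "\<And>x y. x \<le> y \<Longrightarrow> g y \<le> g x"
  shows "g c = c * g 1"
proof -
  have g0: "g 0 = 0" using add[of 0 0] by simp
  have gneg: "g (- x) = - g x" for x using add[of x "-x"] g0 by simp
  have gnat: "g (real n * x) = real n * g x" for n x
    by (induction n) (auto simp: g0 add distrib_right add[symmetric])
  have gint: "g (of_int m) = of_int m * g 1" for m
  proof (cases "m \<ge> 0")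
    case True
    then show ?thesis using gnat[of "nat m" 1] by simp
  next
    case False
    then have "g (of_int (- m)) = of_int (- m) * g 1" using gnat[of "nat (-m)" 1] by simp
    then show ?thesis using gneg[of "of_int m"] by simp
  qed
  have g1: "g 1 \<le> 0" using anti[of 0 1] g0 by simp
  have bnd: "\<bar>g c - c * g 1\<bar> \<le> - g 1 / real n" if n: "n \<ge> 1" for n :: nat
  proof -
    define m where "m = \<lfloor>real n * c\<rfloor>"
    have m1: "of_int m \<le> real n * c" "real n * c \<le> of_int m + 1" unfolding m_def by linarith+
    have "g (of_int m + 1) \<le> g (real n * c)" using m1 by (intro anti)
    moreover have "g (real n * c) \<le> g (of_int m)" using m1 by (intro anti)
    moreover have "g (of_int m + 1) = (of_int m + 1) * g 1" using gint[of "m+1"] by simp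
    ultimately have A: "(of_int m + 1) * g 1 \<le> real n * g c" "real n * g c \<le> of_int m * g 1"
      using gint[of m] gnat[of n c] by auto
    have B: "(of_int m + 1) * g 1 \<le> (real n * c) * g 1" "(real n * c) * g 1 \<le> of_int m * g 1"
      using m1 g1 by (auto intro: mult_right_mono_neg)
    have "\<bar>real n * g c - real n * c * g 1\<bar> \<le> - g 1" using A B by (simp add: algebra_simps abs_le_iff)
    moreover have "real n * g c - real n * c * g 1 = real n * (g c - c * g 1)" by (simp add: algebra_simps)
    moreover have "\<bar>real n * (g c - c * g 1)\<bar> = real n * \<bar>g c - c * g 1\<bar>" by (simp add: abs_mult)
    ultimately have "real n * \<bar>g c - c * g 1\<bar> \<le> - g 1" by simp
    then show ?thesis using n by (simp add: field_simps)
  qed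
  show ?thesis
  proof (rule ccontr)
    assume ne: "g c \<noteq> c * g 1"
    then have pos: "\<bar>g c - c * g 1\<bar> > 0" by simp
    obtain n :: nat where n: "real n > - g 1 / \<bar>g c - c * g 1\<bar>" using reals_Archimedean2 by blast
    have n1: "n \<ge> 1"
    proof (rule ccontr)
      assume "\<not> n \<ge> 1" then have "n = 0" by simp
      moreover have "g 1 / \<bar>g c - c * g 1\<bar> \<le> 0" using g1 pos by (simp add: divide_nonpos_pos)
      ultimately show False using n by simp
    qed
    have "- g 1 < real n * \<bar>g c - c * g 1\<bar>" using n pos by (simp add: field_simps)
    moreover have "real n * \<bar>g c - c * g 1\<bar> \<le> - g 1" using bnd[OF n1] n1 by (simp add: field_simps)
    ultimately show False by linarith
  qed
qed

lemma frechet_branch: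
  fixes G :: "real \<Rightarrow> real"
  assumes dG: "dfun G" and G01: "\<And>y. 0 \<le> G y \<and> G y \<le> 1"
    and pow: "\<And>t. t > 0 \<Longrightarrow> \<exists>A>0. \<exists>B. \<forall>y. G y powr t = G (A*y+B)"
    and A: "0 < A" "A < 1" and eq: "\<And>y. G y ^ 2 = G (ys + A * (y - ys))" and G0: "G ys = 0"
  shows "\<exists>a \<alpha>. a > 0 \<and> \<alpha> > 0 \<and> (\<forall>x. G x = frechet_cdf \<alpha> ((x - ys) / a))"
proof -
  have mono: "mono G" using dG by (auto simp: dfun_def)
  obtain y1 where y1: "0 < G y1" "G y1 < 1" using dG unfolding dfun_def by blast
  have zl: "G y = 0" if "y \<le> ys" for y
  proof -
    have "G y \<le> G ys" using mono that by (auto simp: mono_def)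
    then show ?thesis using G0 G01[of y] by linarith
  qed
  have y1ys: "y1 > ys" using zl[of y1] y1 by force
  have pos: "G y > 0" if "y > ys" for y
  proof (rule ccontr)
    assume "\<not> G y > 0"
    then have Gy: "G y = 0" using G01[of y] by auto
    have Gj: "G (ys + (y - ys) / A ^ j) = 0" for j
    proof (induction j)
      case (Suc j)
      have "G (ys + (y - ys) / A ^ Suc j) ^ 2 = G (ys + (y - ys) / A ^ j)"
      proof -
        have e: "ys + A * (ys + (y - ys) / A ^ Suc j - ys) = ys + (y - ys) / A ^ j"
          using A by (simp add: field_simps)
        show ?thesis using eq[of "ys + (y - ys) / A ^ Suc j"] unfolding e .
      qed
      then show ?case using Suc by simp
    qed (simp add: Gy)
    have "1 < 1 / A" using A by simp
    then obtain j where j: "(y1 - ys) / (y - ys) < (1 / A) ^ j" using real_arch_pow by blast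
    then have "y1 - ys < (y - ys) / A ^ j" using that A by (simp add: field_simps)
    then have "G y1 \<le> G (ys + (y - ys) / A ^ j)" using mono by (auto simp: mono_def)
    then show False using Gj y1 by simp
  qed
  have lt1: "G y < 1" if "y > ys" for y
  proof (rule ccontr)
    assume "\<not> G y < 1"
    then have Gy: "G y = 1" using G01[of y] by auto
    have Gj: "G (ys + A ^ j * (y - ys)) = 1" for j
    proof (induction j)
      case (Suc j)
      have "G (ys + A ^ Suc j * (y - ys)) = G (ys + A ^ j * (y - ys)) ^ 2"
        using eq[of "ys + A ^ j * (y - ys)"] by (simp add: algebra_simps)
      then show ?case using Suc by simp
    qed (simp add: Gy)
    have "(y1 - ys) / (y - ys) > 0" using that y1ys by simp
    then obtain j where j: "A ^ j < (y1 - ys) / (y - ys)" using real_arch_pow_inv A(2) by blast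
    then have "A ^ j * (y - ys) < y1 - ys" using that by (simp add: field_simps)
    then have "G (ys + A ^ j * (y - ys)) \<le> G y1" using mono by (auto simp: mono_def)
    then show False using Gj y1 by simp
  qed
  have Cex: "\<exists>C>0. \<forall>s. G (ys + s) powr t = G (ys + C * s)" if t: "t > 0" for t
  proof -
    obtain At Bt where AB: "At > 0" "\<And>y. G y powr t = G (At * y + Bt)" using pow[OF t] by blast
    have le: "At * ys + Bt \<le> ys"
    proof (rule ccontr)
      assume "\<not> ?thesis"
      then have "G (At * ys + Bt) > 0" using pos by auto
      then show False using AB(2)[of ys] G0 by simp
    qed
    have ge: "At * ys + Bt \<ge> ys"
    proof (rule ccontr)
      assume "\<not> ?thesis"
      define d where "d = ys - (At * ys + Bt)"
      have d: "d > 0" using \<open>\<not> _\<close> by (simp add: d_def)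
      define y where "y = ys + d / (2 * At)"
      have "y > ys" using d AB(1) by (simp add: y_def)
      then have "G y > 0" by (rule pos)
      then have "G y powr t > 0" by simp
      moreover have "At * y + Bt = ys - d / 2" using AB(1) by (simp add: y_def d_def field_simps)
      then have "At * y + Bt \<le> ys" using d by linarith
      ultimately show False using AB(2)[of y] zl by simp
    qed
    have "G (ys + s) powr t = G (ys + At * s)" for s
    proof -
      have "At * (ys + s) + Bt = ys + At * s" using le ge by (simp add: algebra_simps)
      then show ?thesis using AB(2)[of "ys + s"] by simp
    qed
    then show ?thesis using AB(1) by blast
  qed
  define Cf where "Cf t = (SOME C. C > 0 \<and> (\<forall>s. G (ys + s) powr t = G (ys + C * s)))" for t
  have Cf: "Cf t > 0" "G (ys + s) powr t = G (ys + Cf t * s)" if "t > 0" for t s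
    using someI_ex[OF Cex[OF that]] unfolding Cf_def by blast+
  define U where "U s = - ln (G (ys + s))" for s
  have Gpos: "G (ys + s) > 0" "G (ys + s) < 1" if "s > 0" for s using pos lt1 that by auto
  have Upos: "U s > 0" if "s > 0" for s using Gpos[OF that] by (simp add: U_def)
  have Ueq: "U (Cf t * s) = t * U s" if "t > 0" "s > 0" for t s
  proof -
    have "U (Cf t * s) = - ln (G (ys + s) powr t)" using Cf(2)[OF that(1)] by (simp add: U_def)
    also have "\<dots> = t * U s" using Gpos[OF that(2)] by (simp add: U_def ln_powr)
    finally show ?thesis .
  qed
  define V where "V x = ln (U (exp x))" for x
  have Vanti: "V y \<le> V x" if "x \<le> y" for x y
  proof -
    have "G (ys + exp x) \<le> G (ys + exp y)" using that mono by (auto simp: mono_def)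
    then have "U (exp y) \<le> U (exp x)" using Gpos[of "exp x"] Gpos[of "exp y"] by (simp add: U_def)
    then show ?thesis using Upos[of "exp y"] by (simp add: V_def)
  qed
  define g where "g c = ln (Cf (exp c))" for c
  have Vg: "V (x + g c) = V x + c" for x c
  proof -
    have "exp (x + g c) = Cf (exp c) * exp x" using Cf(1)[of "exp c"] by (simp add: g_def exp_add)
    then have "U (exp (x + g c)) = exp c * U (exp x)" using Ueq[of "exp c" "exp x"] by simp
    then show ?thesis using Upos[of "exp x"] by (simp add: V_def ln_mult)
  qed
  have gadd: "g (c + d) = g c + g d" for c d
  proof (rule ccontr)
    assume ne: "g (c + d) \<noteq> g c + g d"
    define \<delta> where "\<delta> = g c + g d - g (c + d)"
    have per: "V (x + \<delta>) = V x" for x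
    proof -
      have "V (x + \<delta> + g (c + d)) = V (x + \<delta>) + (c + d)" by (rule Vg)
      moreover have "x + \<delta> + g (c + d) = (x + g c) + g d" by (simp add: \<delta>_def)
      moreover have "V ((x + g c) + g d) = V x + c + d" using Vg[of "x + g c" d] Vg[of x c] by simp
      ultimately show ?thesis by simp
    qed
    have "V (0 + g 1) = V 0" using periodic_const[of V \<delta>, OF Vanti per] ne by (auto simp: \<delta>_def)
    then show False using Vg[of 0 1] by simp
  qed
  have ganti: "g d \<le> g c" if "c \<le> d" for c d
  proof (rule ccontr)
    assume "\<not> ?thesis"
    then have "V (0 + g d) \<le> V (0 + g c)" by (intro Vanti) auto
    then have "d \<le> c" using Vg[of 0 d] Vg[of 0 c] by simp
    then have "c = d" using that by simp
    then show False using \<open>\<not> _\<close> by simp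
  qed
  have glin: "g c = c * g 1" for c by (rule additive_linear[OF gadd ganti])
  have g1: "g 1 < 0"
  proof -
    have "g 1 \<le> 0" using ganti[of 0 1] glin[of 0] by simp
    moreover have "g 1 \<noteq> 0" using Vg[of 0 1] glin[of 1] by auto
    ultimately show ?thesis by simp
  qed
  define \<alpha> where "\<alpha> = - 1 / g 1"
  have \<alpha>: "\<alpha> > 0" using g1 by (simp add: \<alpha>_def)
  have Vlin: "V x = V 0 - \<alpha> * x" for x
  proof -
    have "g (x / g 1) = x" using glin[of "x / g 1"] g1 by simp
    then have "V x = V 0 + x / g 1" using Vg[of 0 "x / g 1"] by simp
    then show ?thesis by (simp add: \<alpha>_def)
  qed
  define Kc where "Kc = exp (V 0)"
  have Kc: "Kc > 0" by (simp add: Kc_def)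
  have Ufor: "U s = Kc * s powr (- \<alpha>)" if "s > 0" for s
  proof -
    have "V (ln s) = ln (U s)" using that by (simp add: V_def)
    then have "U s = exp (V (ln s))" using that Upos[of s] by simp
    also have "V (ln s) = V 0 + (- \<alpha> * ln s)" by (simp add: Vlin[of "ln s"])
    also have "exp (V 0 + (- \<alpha> * ln s)) = exp (V 0) * exp (- \<alpha> * ln s)" by (rule exp_add)
    also have "exp (- \<alpha> * ln s) = s powr (- \<alpha>)" using that by (simp add: powr_def)
    finally show ?thesis by (simp add: Kc_def)
  qed
  define a where "a = Kc powr (1 / \<alpha>)"
  have a: "a > 0" using Kc by (simp add: a_def)
  have aK: "a powr \<alpha> = Kc" using Kc \<alpha> by (simp add: a_def powr_powr)
  have Gfor: "G (ys + s) = exp (- ((s / a) powr (- \<alpha>)))" if "s > 0" for s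
  proof -
    have "(s / a) powr (- \<alpha>) = s powr (- \<alpha>) / a powr (- \<alpha>)" using that a by (simp add: powr_divide)
    also have "\<dots> = Kc * s powr (- \<alpha>)" using aK a by (simp add: powr_minus field_simps)
    also have "\<dots> = U s" using Ufor[OF that] by simp
    finally have "(s / a) powr (- \<alpha>) = U s" .
    then show ?thesis using Gpos[OF that] by (simp add: U_def)
  qed
  have "G x = frechet_cdf \<alpha> ((x - ys) / a)" for x
  proof (cases "x > ys")
    case True
    then show ?thesis using Gfor[of "x - ys"] a by (simp add: frechet_cdf_def)
  next
    case False
    then have "(x - ys) / a \<le> 0" using a by (simp add: divide_nonpos_pos)
    then show ?thesis using zl[of x] False by (simp add: frechet_cdf_def)
  qed
  then show ?thesis using a \<alpha> by blast
qed



lemma no_frechet_gt1: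
  fixes G :: "real \<Rightarrow> real"
  assumes Gf: "\<And>x. G x = frechet_cdf \<alpha> ((x - b) / a)" and a: "a > 0" and al: "\<alpha> > 1"
    and K: "\<And>t u w. u + w \<le> 2 * t \<Longrightarrow> 1 - G t \<le> 2 * (1 - G u) + (1 - G w)^2"
  shows False
proof -
  have al0: "\<alpha> > 0" using al by simp
  define \<phi> where "\<phi> x = 1 - exp (- ((x / a) powr (- \<alpha>)))" for x
  have Gphi: "1 - G (b + x) = \<phi> x" if "x > 0" for x
    using that a by (simp add: Gf frechet_cdf_def \<phi>_def)
  define P where "P = 2 powr (1 / \<alpha>)"
  define l where "l = (P + 2) / 2"
  have two: "P < 2"
  proof -
    have "2 powr (1 / \<alpha>) < 2 powr 1" using al by (intro powr_less_mono) auto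
    then show ?thesis by (simp add: P_def)
  qed
  have p0: "P > 0" by (simp add: P_def)
  have l2a: "l < 2" using two unfolding l_def by (simp add: field_simps)
  have l2b: "l > P" using two unfolding l_def by (simp add: field_simps)
  have l2c: "l > 0" using p0 unfolding l_def by (simp add: field_simps)
  note l2 = l2a l2b l2c
  have lpow: "l powr \<alpha> > 2"
  proof -
    have "P powr \<alpha> < l powr \<alpha>" using l2 al0 p0 by (intro powr_less_mono2) auto
    then show ?thesis using al0 by (simp add: powr_powr P_def)
  qed
  define p where "p = l powr (- \<alpha>)"
  have p: "p < 1/2" "p \<ge> 0" using lpow l2 by (auto simp: p_def powr_minus field_simps)
  define r where "r = (2 - l) powr (- \<alpha>)"
  have r: "r \<ge> 0" by (simp add: r_def)
  define \<epsilon> where "\<epsilon> = 1 - 2 * p"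
  have \<epsilon>: "\<epsilon> > 0" using p by (simp add: \<epsilon>_def)
  define v where "v = \<epsilon> / (2 * (1 + r^2))"
  have v: "v > 0" using \<epsilon> by (simp add: v_def add_pos_nonneg)
  define s where "s = a * v powr (- 1 / \<alpha>)"
  have s: "s > 0" using a v by (simp add: s_def)
  have sv: "(s / a) powr (- \<alpha>) = v" using a v al0 by (simp add: s_def powr_powr)
  have scale: "(c * s / a) powr (- \<alpha>) = c powr (- \<alpha>) * v" if "c > 0" for c
  proof -
    have "(c * s / a) powr (- \<alpha>) = (c * (s / a)) powr (- \<alpha>)" by simp
    also have "\<dots> = c powr (- \<alpha>) * (s / a) powr (- \<alpha>)" using that s a by (intro powr_mult)
    finally show ?thesis using sv by simp
  qed
  have up: "\<phi> x \<le> (x / a) powr (- \<alpha>)" for x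
    using exp_ge_add_one_self[of "- ((x / a) powr (- \<alpha>))"] by (simp add: \<phi>_def)
  have low: "\<phi> s \<ge> v - v^2"
  proof -
    have "exp v \<ge> 1 + v" by (rule exp_ge_add_one_self)
    then have "exp (- v) \<le> 1 / (1 + v)" using v by (simp add: exp_minus field_simps)
    moreover have "1 / (1 + v) \<le> 1 - v + v^2"
    proof -
      have "1 \<le> (1 - v + v^2) * (1 + v)" using v by (simp add: algebra_simps power2_eq_square power3_eq_cube)
      then show ?thesis using v by (simp add: field_simps)
    qed
    ultimately show ?thesis using sv by (simp add: \<phi>_def)
  qed
  have "1 - G (b + s) \<le> 2 * (1 - G (b + l * s)) + (1 - G (b + (2 - l) * s))^2"
    by (rule K) (simp add: algebra_simps)
  then have "\<phi> s \<le> 2 * \<phi> (l * s) + \<phi> ((2 - l) * s) ^ 2"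
    using Gphi[of s] Gphi[of "l * s"] Gphi[of "(2 - l) * s"] s l2 by simp
  also have "\<dots> \<le> 2 * (p * v) + (r * v) ^ 2"
  proof (intro add_mono mult_left_mono power_mono)
    show "\<phi> (l * s) \<le> p * v" using up[of "l * s"] scale[of l] l2 by (simp add: p_def)
    show "\<phi> ((2 - l) * s) \<le> r * v" using up[of "(2 - l) * s"] scale[of "2 - l"] l2 by (simp add: r_def)
    show "0 \<le> \<phi> ((2 - l) * s)" by (simp add: \<phi>_def)
  qed auto
  finally have "v - v^2 \<le> 2 * p * v + r^2 * v^2" using low by (simp add: power_mult_distrib)
  then have "v * (1 - v) \<le> v * (2 * p + r^2 * v)" by (simp add: algebra_simps power2_eq_square)
  then have "1 - v \<le> 2 * p + r^2 * v" using v by simp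
  then have "\<epsilon> \<le> v * (1 + r^2)" by (simp add: \<epsilon>_def algebra_simps)
  also have "\<dots> = \<epsilon> / 2"
  proof -
    have D: "1 + r^2 > 0" by (simp add: add_pos_nonneg)
    have "\<And>D. D > 0 \<Longrightarrow> \<epsilon> / (2 * D) * D = \<epsilon> / 2" by (simp add: field_simps)
    from this[OF D] show ?thesis by (simp only: v_def)
  qed
  finally show False using \<epsilon> by simp
qed



lemma ev_prod':
  assumes "real_distribution Z" "finite I" "\<And>i. i \<in> I \<Longrightarrow> A i \<in> sets borel"
  shows "{x\<in>space (PiM I (\<lambda>_. Z)). \<forall>i\<in>I. x i \<in> A i} \<in> sets (PiM I (\<lambda>_. Z))"
proof -
  interpret Z: real_distribution Z by fact
  have "{x\<in>space (PiM I (\<lambda>_. Z)). \<forall>i\<in>I. x i \<in> A i} = PiE I A"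
    by (auto simp: space_PiM PiE_def Pi_def)
  moreover have "PiE I A \<in> sets (PiM I (\<lambda>_. Z))"
    using assms by (intro sets_PiM_I_finite) auto
  ultimately show ?thesis by simp
qed

lemma null_coord:
  assumes Z: "real_distribution Z" and Gb: "cdf Z b = 0" and I: "finite I" "i \<in> I"
  shows "measure (PiM I (\<lambda>_. Z)) {x\<in>space (PiM I (\<lambda>_. Z)). x i \<le> b} = 0"
proof -
  interpret Z: real_distribution Z by fact
  have "{x\<in>space (PiM I (\<lambda>_. Z)). x i \<le> b} =
        {x\<in>space (PiM I (\<lambda>_. Z)). \<forall>j\<in>I. x j \<in> (if j = i then {..b} else UNIV)}"
    using I by auto
  also have "measure (PiM I (\<lambda>_. Z)) \<dots> = (\<Prod>j\<in>I. measure Z (if j = i then {..b} else UNIV))"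
    by (rule prod_meas) (auto simp: Z.prob_space_axioms I)
  also have "\<dots> = 0" using I Gb by (intro prod_zero) (auto simp: cdf_def intro!: bexI[of _ i])
  finally show ?thesis .
qed

lemma frechet_Dminus:
  assumes Z: "real_distribution Z" and a: "a > 0" and al: "0 < \<alpha>" "\<alpha> \<le> 1"
    and Gf: "\<And>x. cdf Z x = frechet_cdf \<alpha> ((x - b) / a)"
  shows "D_minus Z"
  unfolding D_minus_def stoch_le_def
proof (intro allI impI)
  interpret Z: real_distribution Z by fact
  fix n :: nat and \<theta> :: "nat \<Rightarrow> real" and t :: real
  assume \<theta>: "(\<forall>i<n. 0 \<le> \<theta> i) \<and> (\<Sum>i<n. \<theta> i) = 1"
  then have \<theta>0: "\<And>i. i < n \<Longrightarrow> \<theta> i \<ge> 0" and \<theta>1: "(\<Sum>i<n. \<theta> i) = 1" by auto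
  have \<theta>le: "\<theta> i \<le> 1" if "i < n" for i
  proof -
    have "\<theta> i \<le> (\<Sum>i<n. \<theta> i)" using that \<theta>0 by (intro member_le_sum) auto
    then show ?thesis using \<theta>1 by simp
  qed
  let ?P = "PiM {..<n} (\<lambda>_. Z)"
  let ?f = "\<lambda>x. \<Sum>i<n. \<theta> i * x i"
  interpret P: prob_space ?P by (rule prob_space_PiM) (simp add: Z.prob_space_axioms)
  have fm: "?f \<in> borel_measurable ?P" by measurable
  have cdfeq: "cdf (distr ?P borel ?f) t = measure ?P {x\<in>space ?P. ?f x \<le> t}"
    unfolding cdf_def using fm by (simp add: measure_distr vimage_def Int_def conj_commute)
  have Gb: "cdf Z b = 0" using Gf[of b] by (simp add: frechet_cdf_def)
  define N where "N = (\<Union>i<n. {x\<in>space ?P. x i \<le> b})"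
  have Nev: "{x\<in>space ?P. x i \<le> b} \<in> P.events" if "i < n" for i
  proof -
    have "i \<in> {..<n}" using that by simp
    then show ?thesis by measurable
  qed
  have N0: "measure ?P N = 0"
  proof -
    have "measure ?P N \<le> (\<Sum>i<n. measure ?P {x\<in>space ?P. x i \<le> b})"
      unfolding N_def using Nev by (intro P.finite_measure_subadditive_finite) auto
    also have "\<dots> = 0" by (intro sum.neutral ballI null_coord[OF Z Gb]) auto
    finally show ?thesis using measure_nonneg[of ?P N] by linarith
  qed
  have Nin: "N \<in> P.events" unfolding N_def using Nev by auto
  have diff: "?f x - b = (\<Sum>i<n. \<theta> i * (x i - b))" for x
    using \<theta>1 by (simp add: algebra_simps sum_subtractf sum_distrib_left[symmetric])
  show "cdf (distr ?P borel ?f) t \<le> cdf Z t"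
  proof (cases "t > b")
    case False
    have sub: "{x\<in>space ?P. ?f x \<le> t} \<subseteq> N"
    proof
      fix x assume x: "x \<in> {x\<in>space ?P. ?f x \<le> t}"
      show "x \<in> N"
      proof (rule ccontr)
        assume "x \<notin> N"
        then have gt: "x i > b" if "i < n" for i using x that by (auto simp: N_def not_le)
        have "\<exists>i<n. \<theta> i > 0"
        proof (rule ccontr)
          assume "\<not> ?thesis"
          then have "\<theta> i = 0" if "i < n" for i using \<theta>0[OF that] that by force
          then have "(\<Sum>i<n. \<theta> i) = 0" by simp
          then show False using \<theta>1 by simp
        qed
        then obtain i0 where i0: "i0 < n" "\<theta> i0 > 0" by blast
        have "0 < (\<Sum>i<n. \<theta> i * (x i - b))"
        proof (rule sum_pos2[of _ i0])
          show "0 \<le> \<theta> i * (x i - b)" if "i \<in> {..<n}" for i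
            using gt[of i] \<theta>0[of i] that by simp
          show "0 < \<theta> i0 * (x i0 - b)" using i0 gt[of i0] by simp
        qed (use i0 in auto)
        then have "?f x > b" using diff[of x] by linarith
        then show False using x False by auto
      qed
    qed
    have "measure ?P {x\<in>space ?P. ?f x \<le> t} \<le> measure ?P N"
      using sub Nin by (intro P.finite_measure_mono) auto
    then have "cdf (distr ?P borel ?f) t \<le> 0" using cdfeq N0 by simp
    also have "0 \<le> cdf Z t" by (rule Z.cdf_nonneg)
    finally show ?thesis .
  next
    case True
    define s where "s = t - b"
    have s: "s > 0" using True by (simp add: s_def)
    define Ai where "Ai i = (if \<theta> i > 0 then {..b + s / \<theta> i} else UNIV)" for i
    define E where "E = {x\<in>space ?P. \<forall>i\<in>{..<n}. x i \<in> Ai i}"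
    have Eev: "E \<in> P.events" unfolding E_def by (intro ev_prod'[OF Z]) (auto simp: Ai_def)
    have sub: "{x\<in>space ?P. ?f x \<le> t} \<subseteq> E \<union> N"
    proof
      fix x assume x: "x \<in> {x\<in>space ?P. ?f x \<le> t}"
      show "x \<in> E \<union> N"
      proof (cases "x \<in> N")
        case False
        then have gt: "x i > b" if "i < n" for i using x that by (auto simp: N_def not_le)
        have nn: "0 \<le> \<theta> i * (x i - b)" if "i < n" for i using gt[OF that] \<theta>0[OF that] by simp
        have "x i \<in> Ai i" if i: "i < n" for i
        proof (cases "\<theta> i > 0")
          case True
          have "\<theta> i * (x i - b) \<le> (\<Sum>i<n. \<theta> i * (x i - b))"
            using i nn by (intro member_le_sum) auto
          also have "\<dots> \<le> s" using diff[of x] x by (simp add: s_def)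
          finally have "x i - b \<le> s / \<theta> i" using True by (simp add: field_simps)
          then show ?thesis using True by (simp add: Ai_def)
        qed (simp add: Ai_def)
        then show ?thesis using x by (auto simp: E_def)
      qed auto
    qed
    define v where "v = (s / a) powr (- \<alpha>)"
    have v: "v > 0" using s a by (simp add: v_def)
    have mA: "measure Z (Ai i) = exp (- (\<theta> i powr \<alpha> * v))" if i: "i < n" for i
    proof (cases "\<theta> i > 0")
      case True
      have pos: "s / \<theta> i / a > 0" using s a True by simp
      have "measure Z (Ai i) = cdf Z (b + s / \<theta> i)" using True by (simp add: Ai_def cdf_def)
      also have "\<dots> = exp (- ((s / \<theta> i / a) powr (- \<alpha>)))" using pos by (simp add: Gf frechet_cdf_def)
      also have "(s / \<theta> i / a) powr (- \<alpha>) = \<theta> i powr \<alpha> * v"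
      proof -
        have "s / \<theta> i / a = inverse (\<theta> i) * (s / a)" by (simp add: field_simps)
        then have "(s / \<theta> i / a) powr (- \<alpha>) = (inverse (\<theta> i) * (s / a)) powr (- \<alpha>)" by simp
        also have "\<dots> = inverse (\<theta> i) powr (- \<alpha>) * (s / a) powr (- \<alpha>)"
          using True s a by (intro powr_mult)
        also have "inverse (\<theta> i) powr (- \<alpha>) = \<theta> i powr \<alpha>"
          using True by (simp add: powr_minus inverse_powr)
        finally show ?thesis by (simp add: v_def)
      qed
      finally show ?thesis .
    next
      case False
      then have "\<theta> i = 0" using \<theta>0[OF i] by simp
      then show ?thesis by (simp add: Ai_def Z.prob_space[unfolded Z.space_eq_univ])
    qed
    have mE: "measure ?P E = exp (- (v * (\<Sum>i<n. \<theta> i powr \<alpha>)))"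
    proof -
      have "measure ?P E = (\<Prod>i<n. measure Z (Ai i))"
        unfolding E_def by (rule prod_meas) (auto simp: Z.prob_space_axioms Ai_def)
      also have "\<dots> = (\<Prod>i<n. exp (- (\<theta> i powr \<alpha> * v)))" using mA by simp
      also have "\<dots> = exp (\<Sum>i<n. - (\<theta> i powr \<alpha> * v))" by (simp add: exp_sum)
      also have "(\<Sum>i<n. - (\<theta> i powr \<alpha> * v)) = - (v * (\<Sum>i<n. \<theta> i powr \<alpha>))"
        by (simp add: sum_negf sum_distrib_left mult.commute)
      finally show ?thesis .
    qed
    have sum1: "(\<Sum>i<n. \<theta> i powr \<alpha>) \<ge> 1"
    proof -
      have "\<theta> i \<le> \<theta> i powr \<alpha>" if i: "i < n" for i
      proof (cases "\<theta> i > 0")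
        case True
        have "\<theta> i powr 1 \<le> \<theta> i powr \<alpha>" using al \<theta>le[OF i] True by (intro powr_mono') auto
        then show ?thesis using True by simp
      next
        case False then show ?thesis using \<theta>0[OF i] by simp
      qed
      then have "(\<Sum>i<n. \<theta> i) \<le> (\<Sum>i<n. \<theta> i powr \<alpha>)" by (intro sum_mono) auto
      then show ?thesis using \<theta>1 by simp
    qed
    have "measure ?P {x\<in>space ?P. ?f x \<le> t} \<le> measure ?P (E \<union> N)"
      using sub Eev Nin by (intro P.finite_measure_mono) auto
    also have "\<dots> \<le> measure ?P E + measure ?P N"
      using Eev Nin by (intro measure_subadditive) (auto simp: P.emeasure_eq_measure)
    also have "\<dots> = exp (- (v * (\<Sum>i<n. \<theta> i powr \<alpha>)))" using mE N0 by simp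
    also have "\<dots> \<le> exp (- v)" using sum1 v by (simp add: mult_le_cancel_left1 less_imp_le)
    also have "exp (- v) = cdf Z t"
      using s a by (simp add: Gf frechet_cdf_def v_def s_def)
    finally show ?thesis using cdfeq by simp
  qed
qed



theorem theorem5:
  fixes Z :: "real measure"
  assumes "max_stable Z"
  shows "D_minus Z \<longleftrightarrow>
    (\<exists>a b \<alpha>. a > 0 \<and> 0 < \<alpha> \<and> \<alpha> \<le> 1 \<and>
       (\<forall>x. cdf Z x = frechet_cdf \<alpha> ((x - b) / a)))"
proof -
  have Z: "real_distribution Z" and nd: "nondegenerate Z" using assms by (auto simp: max_stable_def)
  interpret Z: real_distribution Z by fact
  show ?thesis
  proof
    assume Dm: "D_minus Z"
    define G where "G = cdf Z"
    have dG: "dfun G" unfolding G_def by (rule cdf_dfun[OF Z nd])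
    have G01: "0 \<le> G y \<and> G y \<le> 1" for y by (simp add: G_def Z.cdf_nonneg Z.cdf_bounded_prob)
    have mono: "mono G" using dG by (simp add: dfun_def)
    have pow: "\<exists>A>0. \<exists>B. \<forall>y. G y powr t = G (A*y+B)" if "t > 0" for t
      unfolding G_def by (rule max_stable_pow[OF assms that])
    have K: "1 - G t \<le> 2 * (1 - G u) + (1 - G w)^2" if "u + w \<le> 2 * t" for t u w
      unfolding G_def by (rule tail2[OF Z Dm that])
    obtain A B where AB: "A > 0" "\<And>y. G y powr 2 = G (A*y+B)" using pow[of 2] by auto
    have sq: "G y ^ 2 = G (A*y+B)" for y using AB(2)[of y] G01[of y] by simp
    show "\<exists>a b \<alpha>. a > 0 \<and> 0 < \<alpha> \<and> \<alpha> \<le> 1 \<and> (\<forall>x. cdf Z x = frechet_cdf \<alpha> ((x - b) / a))"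
    proof (cases "A = 1")
      case True
      show ?thesis
      proof (cases "B < 0")
        case True
        have "G (y - (- B)) = G y ^ 2" for y using sq[of y] \<open>A = 1\<close> by simp
        then have False using no_gumbel[OF dG G01 K, of "-B"] True by auto
        then show ?thesis ..
      next
        case False
        have "G y = 0 \<or> G y = 1" for y
        proof (rule sq01)
          show "G y \<le> G y ^ 2" using sq[of y] \<open>A = 1\<close> False mono by (auto simp: mono_def)
        qed (use G01 in auto)
        then have False using not01[OF dG] by blast
        then show ?thesis ..
      qed
    next
      case False
      define ys where "ys = B / (1 - A)"
      have aff: "A * y + B = ys + A * (y - ys)" for y
      proof -
        have "1 - A \<noteq> 0" using False by simp
        then have "ys * (1 - A) = B" by (simp add: ys_def)
        moreover have "ys + A * (y - ys) = A * y + ys * (1 - A)" by (simp add: algebra_simps)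
        ultimately show ?thesis by simp
      qed
      have sq': "G y ^ 2 = G (ys + A * (y - ys))" for y using sq[of y] aff[of y] by simp
      have "G ys = 0 \<or> G ys = 1" using sq'[of ys] G01[of ys] by (intro sq01) auto
      then show ?thesis
      proof
        assume G0: "G ys = 0"
        show ?thesis
        proof (cases "A < 1")
          case True
          obtain a \<alpha> where fa: "a > 0" "\<alpha> > 0" "\<And>x. G x = frechet_cdf \<alpha> ((x - ys) / a)"
            using frechet_branch[OF dG G01 pow \<open>A > 0\<close> True sq' G0] by blast
          have "\<alpha> \<le> 1"
          proof (rule ccontr)
            assume "\<not> \<alpha> \<le> 1"
            then show False using no_frechet_gt1[OF fa(3) fa(1) _ K] by simp
          qed
          then show ?thesis using fa unfolding G_def by blast
        next
          case False
          then have A1: "A > 1" using \<open>A \<noteq> 1\<close> by simp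
          have "G y = 0 \<or> G y = 1" for y
          proof (cases "y > ys")
            case True
            show ?thesis
            proof (rule sq01)
              have "(A - 1) * (y - ys) \<ge> 0" using True A1 by simp
              then have "y \<le> ys + A * (y - ys)" by (simp add: algebra_simps)
              then show "G y \<le> G y ^ 2" using sq'[of y] mono by (auto simp: mono_def)
            qed (use G01 in auto)
          next
            case False
            then have "G y \<le> G ys" using mono by (auto simp: mono_def)
            then show ?thesis using G0 G01[of y] by auto
          qed
          then have False using not01[OF dG] by blast
          then show ?thesis ..
        qed
      next
        assume G1: "G ys = 1"
        show ?thesis
        proof (cases "A < 1")
          case True
          have "G y = 0 \<or> G y = 1" for y
          proof (cases "y < ys")
            case True
            show ?thesis
            proof (rule sq01)
              have "(1 - A) * (ys - y) \<ge> 0" using True \<open>A < 1\<close> by simp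
              then have "y \<le> ys + A * (y - ys)" by (simp add: algebra_simps)
              then show "G y \<le> G y ^ 2" using sq'[of y] mono by (auto simp: mono_def)
            qed (use G01 in auto)
          next
            case False
            then have "G ys \<le> G y" using mono by (auto simp: mono_def)
            then show ?thesis using G1 G01[of y] by auto
          qed
          then have False using not01[OF dG] by blast
          then show ?thesis ..
        next
          case False
          then have A1: "A > 1" using \<open>A \<noteq> 1\<close> by simp
          have False by (rule no_weibull[OF dG G01 K A1 sq' G1])
          then show ?thesis ..
        qed
      qed
    qed
  next
    assume "\<exists>a b \<alpha>. a > 0 \<and> 0 < \<alpha> \<and> \<alpha> \<le> 1 \<and> (\<forall>x. cdf Z x = frechet_cdf \<alpha> ((x - b) / a))"
    then obtain a b \<alpha> where "a > 0" "0 < \<alpha>" "\<alpha> \<le> 1" "\<And>x. cdf Z x = frechet_cdf \<alpha> ((x - b) / a)" by blast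
    then show "D_minus Z" by (intro frechet_Dminus[OF Z]) auto
  qed
qed


end
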